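(* Let $\Omega\subset\mathbb{R}^2$ be a Jordan domain with analytic boundary, let $f^{(0)}$ be a harmonic function in $\Omega$ extending to a real analytic function in $\overline\Omega$ with nonvanishing Hessian on $\overline\Omega$ (including $\partial\Omega$), and let $\varepsilon>0$. Then there is at most one real analytic family $f\colon\overline\Omega\times[-\varepsilon;\varepsilon]\to\mathbb{R}$ satisfying $f_{xx}+f_{yy}=t\sqrt{(f_{xy})^2-f_{xx}f_{yy}}$ and such that $f(x,y,t)=f^{(0)}(x,y)$ whenever $t=0$ or $(x,y)\in\partial\Omega$.
   Context: A Jordan domain with analytic boundary is a domain bounded by the image of a periodic injective real analytic map $\mathbb{R}\to\mathbb{R}^2$ with nowhere vanishing derivative. A real analytic family is a map $\overline\Omega\times[-\varepsilon;\varepsilon]\to\mathbb{R}$ extending to a real analytic function on a neighborhood of $\overline\Omega\times[-\varepsilon;\varepsilon]$. A function on $\overline\Omega$ is real analytic in the closed domain if it extends real analytically to a neighborhood of $\overline\Omega$. *)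

theory Defs
  imports "HOL-Analysis.Analysis"
begin

text \<open>Real analyticity, defined via locally convergent power series
  (unconditional summation of real series = absolute convergence).\<close>

definition real_analytic1_on :: "real set \<Rightarrow> (real \<Rightarrow> real) \<Rightarrow> bool" where
  "real_analytic1_on U g \<longleftrightarrow> open U \<and>
     (\<forall>a\<in>U. \<exists>r>0. \<exists>c :: nat \<Rightarrow> real. ball a r \<subseteq> U \<and>
        (\<forall>x\<in>ball a r. ((\<lambda>i. c i * (x - a) ^ i) has_sum g x) UNIV))"

definition real_analytic2_on :: "(real \<times> real) set \<Rightarrow> (real \<times> real \<Rightarrow> real) \<Rightarrow> bool" where
  "real_analytic2_on U g \<longleftrightarrow> open U \<and>
     (\<forall>a\<in>U. \<exists>r>0. \<exists>c :: nat \<Rightarrow> nat \<Rightarrow> real. ball a r \<subseteq> U \<and>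
        (\<forall>p\<in>ball a r. ((\<lambda>(i,j). c i j * (fst p - fst a) ^ i * (snd p - snd a) ^ j)
                          has_sum g p) UNIV))"

definition real_analytic3_on ::
    "((real \<times> real) \<times> real) set \<Rightarrow> ((real \<times> real) \<times> real \<Rightarrow> real) \<Rightarrow> bool" where
  "real_analytic3_on U g \<longleftrightarrow> open U \<and>
     (\<forall>a\<in>U. \<exists>r>0. \<exists>c :: nat \<Rightarrow> nat \<Rightarrow> nat \<Rightarrow> real. ball a r \<subseteq> U \<and>
        (\<forall>p\<in>ball a r. ((\<lambda>(i,j,k). c i j k * (fst (fst p) - fst (fst a)) ^ i
                               * (snd (fst p) - snd (fst a)) ^ j * (snd p - snd a) ^ k)
                          has_sum g p) UNIV))"

definition jordan_domain_analytic :: "(real \<times> real) set \<Rightarrow> bool" where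
  "jordan_domain_analytic \<Omega> \<longleftrightarrow>
     (\<exists>\<gamma> :: real \<Rightarrow> real \<times> real. \<exists>P>0.
        (\<forall>t. \<gamma> (t + P) = \<gamma> t) \<and> inj_on \<gamma> {0..<P} \<and>
        real_analytic1_on UNIV (\<lambda>t. fst (\<gamma> t)) \<and>
        real_analytic1_on UNIV (\<lambda>t. snd (\<gamma> t)) \<and>
        (\<forall>t. \<exists>v. (\<gamma> has_vector_derivative v) (at t) \<and> v \<noteq> 0) \<and>
        \<Omega> = inside (range \<gamma>))"

text \<open>Real analytic in the closed domain: extends analytically to an open neighbourhood.
  We phrase it for a function defined everywhere which is analytic on an open
  neighbourhood of the closed set; its restriction is the function in question.\<close>

definition analytic_on_closed2 :: "(real \<times> real) set \<Rightarrow> (real \<times> real \<Rightarrow> real) \<Rightarrow> bool" where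
  "analytic_on_closed2 S g \<longleftrightarrow> (\<exists>U. S \<subseteq> U \<and> real_analytic2_on U g)"

definition analytic_on_closed3 ::
    "((real \<times> real) \<times> real) set \<Rightarrow> ((real \<times> real) \<times> real \<Rightarrow> real) \<Rightarrow> bool" where
  "analytic_on_closed3 S g \<longleftrightarrow> (\<exists>U. S \<subseteq> U \<and> real_analytic3_on U g)"

definition dxx :: "(real \<times> real \<Rightarrow> real) \<Rightarrow> real \<times> real \<Rightarrow> real" where
  "dxx g p = deriv (\<lambda>s. deriv (\<lambda>r. g (r, snd p)) s) (fst p)"

definition dyy :: "(real \<times> real \<Rightarrow> real) \<Rightarrow> real \<times> real \<Rightarrow> real" where
  "dyy g p = deriv (\<lambda>s. deriv (\<lambda>r. g (fst p, r)) s) (snd p)"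

definition dxy :: "(real \<times> real \<Rightarrow> real) \<Rightarrow> real \<times> real \<Rightarrow> real" where
  "dxy g p = deriv (\<lambda>s. deriv (\<lambda>r. g (r, s)) (fst p)) (snd p)"

end

theory Submission
  imports Defs
begin

lemma npow_bound:
  fixes \<rho> K :: real
  assumes "0 \<le> \<rho>" "\<rho> < K"
  shows "\<exists>C\<ge>0. \<forall>n. real n * \<rho> ^ n \<le> C * K ^ n"
proof -
  have K: "K > 0" using assms by simp
  have "(\<lambda>n. of_nat n * (\<rho>/K) ^ n) \<longlonglongrightarrow> (0::real)"
    by (rule powser_times_n_limit_0) (use assms K in simp)
  then have "Bseq (\<lambda>n. of_nat n * (\<rho>/K) ^ n)" by (rule convergent_imp_Bseq[OF convergentI])
  then obtain C where C: "C > 0" "\<And>n. norm (of_nat n * (\<rho>/K) ^ n) \<le> C" by (auto elim: BseqE)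
  have "real n * \<rho> ^ n \<le> C * K ^ n" for n
  proof -
    have "real n * \<rho> ^ n = (of_nat n * (\<rho>/K) ^ n) * K ^ n"
      using K by (simp add: power_divide)
    also have "\<dots> \<le> C * K ^ n"
      using C(2)[of n] K by (intro mult_right_mono) (auto simp: abs_le_iff)
    finally show ?thesis .
  qed
  with C show ?thesis by (intro exI[of _ C]) auto
qed

lemma npow_bound1:
  fixes \<rho> K :: real
  assumes "0 < \<rho>" "\<rho> < K"
  shows "\<exists>C\<ge>0. \<forall>n. real n * \<rho> ^ (n - 1) \<le> C * K ^ n"
proof -
  obtain C where C: "C \<ge> 0" "\<And>n. real n * \<rho> ^ n \<le> C * K ^ n" using npow_bound[of \<rho> K] assms by auto
  have "real n * \<rho> ^ (n - 1) \<le> (C / \<rho>) * K ^ n" for n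
  proof (cases n)
    case 0 then show ?thesis using C assms by simp
  next
    case (Suc m)
    have "real n * \<rho> ^ (n - 1) = (real n * \<rho> ^ n) / \<rho>" using Suc assms by (simp)
    also have "\<dots> \<le> (C * K ^ n) / \<rho>" using C(2)[of n] assms by (intro divide_right_mono) auto
    finally show ?thesis by simp
  qed
  then show ?thesis using C assms by (intro exI[of _ "C/\<rho>"]) auto
qed

lemma npow_bound2:
  fixes \<rho> K :: real
  assumes "0 < \<rho>" "\<rho> < K"
  shows "\<exists>C\<ge>0. \<forall>n. real n * real (n - 1) * \<rho> ^ (n - 2) \<le> C * K ^ n"
proof -
  define \<rho>1 where "\<rho>1 = (\<rho> + K) / 2"
  have r1: "\<rho> < \<rho>1" "\<rho>1 < K" using assms by (auto simp: \<rho>1_def)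
  obtain C1 where C1: "C1 \<ge> 0" "\<And>n. real n * \<rho> ^ (n - 1) \<le> C1 * \<rho>1 ^ n"
    using npow_bound1[of \<rho> \<rho>1] assms r1 by auto
  obtain C2 where C2: "C2 \<ge> 0" "\<And>n. real n * \<rho>1 ^ (n - 1) \<le> C2 * K ^ n"
    using npow_bound1[of \<rho>1 K] assms r1 by auto
  have "real n * real (n - 1) * \<rho> ^ (n - 2) \<le> (C1 * C2) * K ^ n" for n
  proof (cases n)
    case 0 then show ?thesis using C1 C2 assms by simp
  next
    case (Suc m)
    have "real n * real (n - 1) * \<rho> ^ (n - 2) = real n * (real m * \<rho> ^ (m - 1))"
      using Suc by (simp add: numeral_2_eq_2)
    also have "\<dots> \<le> real n * (C1 * \<rho>1 ^ m)" by (intro mult_left_mono C1(2)) auto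
    also have "\<dots> = C1 * (real n * \<rho>1 ^ (n - 1))" using Suc by simp
    also have "\<dots> \<le> C1 * (C2 * K ^ n)" by (intro mult_left_mono C2(2) C1(1))
    finally show ?thesis by simp
  qed
  then show ?thesis using C1 C2 by (intro exI[of _ "C1*C2"]) auto
qed

lemma summ_cmp:
  fixes w :: "'i \<Rightarrow> real" and f :: "'i \<Rightarrow> real"
  assumes "(\<lambda>i. w i * K ^ e i) summable_on UNIV" "K \<ge> 0" "C \<ge> 0"
    and "\<And>i. \<bar>f i\<bar> \<le> C * (\<bar>w i\<bar> * K ^ e i)"
  shows "f summable_on UNIV"
proof -
  have "(\<lambda>i. norm (w i * K ^ e i)) summable_on UNIV"
    using assms(1) by (rule summable_on_iff_abs_summable_on_real[THEN iffD1])
  then have "(\<lambda>i. C * norm (w i * K ^ e i)) summable_on UNIV"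
    by (rule summable_on_cmult_right)
  then have "(\<lambda>i. norm (f i)) summable_on UNIV"
  proof (rule Infinite_Sum.abs_summable_on_comparison_test')
    fix i
    have "\<bar>w i * K ^ e i\<bar> = \<bar>w i\<bar> * K ^ e i"
      using assms(2) by (simp add: abs_mult)
    then show "norm (f i) \<le> C * norm (w i * K ^ e i)" using assms(4)[of i] by simp
  qed
  then show ?thesis by (rule summable_on_iff_abs_summable_on_real[THEN iffD2])
qed

lemma has_sum_diff':
  fixes f g :: "'i \<Rightarrow> real"
  assumes "(f has_sum a) A" "(g has_sum b) A"
  shows "((\<lambda>x. f x - g x) has_sum (a - b)) A"
proof -
  have "((\<lambda>x. - g x) has_sum (- b)) A" using assms(2) by (simp add: has_sum_uminus)
  from has_sum_add[OF assms(1) this] show ?thesis by simp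
qed

lemma gen_deriv:
  fixes w :: "'i \<Rightarrow> real" and e :: "'i \<Rightarrow> nat"
  assumes sK: "(\<lambda>i. w i * K ^ e i) summable_on UNIV" and s: "\<bar>s\<bar> < K"
  shows "(\<lambda>i. w i * real (e i) * s ^ (e i - 1)) summable_on UNIV"
    and "((\<lambda>z. \<Sum>\<^sub>\<infinity>i. w i * z ^ e i) has_real_derivative
            (\<Sum>\<^sub>\<infinity>i. w i * real (e i) * s ^ (e i - 1))) (at s)"
proof -
  define \<rho> where "\<rho> = (\<bar>s\<bar> + K) / 2"
  have \<rho>: "\<bar>s\<bar> < \<rho>" "\<rho> < K" "0 < \<rho>" using s by (auto simp: \<rho>_def)
  have K0: "K \<ge> 0" using \<rho> by simp
  obtain C1 where C1: "C1 \<ge> 0" "\<And>n. real n * \<rho> ^ (n - 1) \<le> C1 * K ^ n"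
    using npow_bound1[OF \<rho>(3) \<rho>(2)] by blast
  obtain C2 where C2: "C2 \<ge> 0" "\<And>n. real n * real (n - 1) * \<rho> ^ (n - 2) \<le> C2 * K ^ n"
    using npow_bound2[OF \<rho>(3) \<rho>(2)] by blast
  define F where "F = (\<lambda>z. \<Sum>\<^sub>\<infinity>i. w i * z ^ e i)"
  have sumz: "(\<lambda>i. w i * z ^ e i) summable_on UNIV" if "\<bar>z\<bar> \<le> K" for z
  proof (rule summ_cmp[OF sK K0, of 1])
    fix i
    have "\<bar>z\<bar> ^ e i \<le> K ^ e i" using that by (intro power_mono) auto
    then show "\<bar>w i * z ^ e i\<bar> \<le> 1 * (\<bar>w i\<bar> * K ^ e i)"
      by (simp add: abs_mult power_abs mult_left_mono)
  qed simp
  show A: "(\<lambda>i. w i * real (e i) * s ^ (e i - 1)) summable_on UNIV"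
  proof (rule summ_cmp[OF sK K0 C1(1)])
    fix i
    have "\<bar>s\<bar> ^ (e i - 1) \<le> \<rho> ^ (e i - 1)" using \<rho> by (intro power_mono) auto
    then have "real (e i) * \<bar>s\<bar> ^ (e i - 1) \<le> C1 * K ^ e i"
      using C1(2)[of "e i"] by (meson mult_left_mono of_nat_0_le_iff order_trans)
    then have "\<bar>w i\<bar> * (real (e i) * \<bar>s\<bar> ^ (e i - 1)) \<le> \<bar>w i\<bar> * (C1 * K ^ e i)"
      by (intro mult_left_mono) auto
    then show "\<bar>w i * real (e i) * s ^ (e i - 1)\<bar> \<le> C1 * (\<bar>w i\<bar> * K ^ e i)"
      by (simp add: abs_mult power_abs mult_ac)
  qed
  define B where "B = (\<lambda>i. \<bar>w i\<bar> * (real (e i) * real (e i - 1) * \<rho> ^ (e i - 2)))"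
  have sumB: "B summable_on UNIV" unfolding B_def
  proof (rule summ_cmp[OF sK K0 C2(1)])
    fix i
    have "\<bar>w i\<bar> * (real (e i) * real (e i - 1) * \<rho> ^ (e i - 2)) \<le> \<bar>w i\<bar> * (C2 * K ^ e i)"
      using C2(2)[of "e i"] by (intro mult_left_mono) auto
    moreover have "0 \<le> \<bar>w i\<bar> * (real (e i) * real (e i - 1) * \<rho> ^ (e i - 2))"
      using \<rho> by simp
    ultimately show "\<bar>\<bar>w i\<bar> * (real (e i) * real (e i - 1) * \<rho> ^ (e i - 2))\<bar> \<le> C2 * (\<bar>w i\<bar> * K ^ e i)"
      by (simp add: mult_ac)
  qed
  define M where "M = infsum B UNIV"
  define D where "D = (\<Sum>\<^sub>\<infinity>i. w i * real (e i) * s ^ (e i - 1))"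
  have hD: "((\<lambda>i. w i * real (e i) * s ^ (e i - 1)) has_sum D) UNIV"
    using A unfolding D_def by simp
  have bound: "\<bar>(F (s + h) - F s) / h - D\<bar> \<le> M * \<bar>h\<bar>" if h: "h \<noteq> 0" "\<bar>h\<bar> < \<rho> - \<bar>s\<bar>" for h
  proof -
    have sh: "\<bar>s + h\<bar> \<le> \<rho>" using h by linarith
    have h1: "((\<lambda>i. w i * (s + h) ^ e i) has_sum F (s + h)) UNIV"
      unfolding F_def using sumz[of "s+h"] sh \<rho> by simp
    have h0: "((\<lambda>i. w i * s ^ e i) has_sum F s) UNIV"
      unfolding F_def using sumz[of "s"] \<rho> by simp
    define T where "T = (\<lambda>i. w i * (((s + h) ^ e i - s ^ e i) / h - real (e i) * s ^ (e i - 1)))"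
    have "((\<lambda>i. (w i * (s + h) ^ e i - w i * s ^ e i) * inverse h - w i * real (e i) * s ^ (e i - 1))
           has_sum ((F (s + h) - F s) * inverse h - D)) UNIV"
      by (intro has_sum_diff' hD has_sum_cmult_left h1 h0)
    moreover have "(\<lambda>i. (w i * (s + h) ^ e i - w i * s ^ e i) * inverse h - w i * real (e i) * s ^ (e i - 1)) = T"
      unfolding T_def by (auto simp: algebra_simps divide_inverse)
    ultimately have hT: "(T has_sum ((F (s + h) - F s) / h - D)) UNIV"
      by (simp add: divide_inverse)
    have Tb: "\<bar>T i\<bar> \<le> B i * \<bar>h\<bar>" for i
    proof -
      have "norm (((s + h) ^ e i - s ^ e i) / h - of_nat (e i) * s ^ (e i - Suc 0))
            \<le> of_nat (e i) * of_nat (e i - Suc 0) * \<rho> ^ (e i - 2) * norm h"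
        by (rule lemma_termdiff3) (use h sh \<rho> in auto)
      then have "\<bar>w i\<bar> * \<bar>((s + h) ^ e i - s ^ e i) / h - real (e i) * s ^ (e i - 1)\<bar>
             \<le> \<bar>w i\<bar> * (real (e i) * real (e i - 1) * \<rho> ^ (e i - 2) * \<bar>h\<bar>)"
        by (intro mult_left_mono) auto
      then show ?thesis unfolding T_def B_def by (simp add: abs_mult mult_ac)
    qed
    have nT: "(\<lambda>i. norm (T i)) summable_on UNIV"
      using hT summable_on_iff_abs_summable_on_real[THEN iffD1] has_sum_imp_summable by blast
    have "\<bar>(F (s + h) - F s) / h - D\<bar> \<le> infsum (\<lambda>i. norm (T i)) UNIV"
      using norm_has_sum_bound[OF has_sum_infsum[OF nT] hT] by simp
    also have "\<dots> \<le> infsum (\<lambda>i. B i * \<bar>h\<bar>) UNIV"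
      by (rule infsum_mono[OF nT summable_on_cmult_left[OF sumB]]) (use Tb in simp)
    also have "\<dots> = M * \<bar>h\<bar>" unfolding M_def by (rule infsum_cmult_left[OF sumB])
    finally show ?thesis .
  qed
  have "((\<lambda>h. (F (s + h) - F s) / h - D) \<longlongrightarrow> 0) (at 0)"
  proof (rule Lim_null_comparison[where g = "\<lambda>h. M * \<bar>h\<bar>"])
    have "\<forall>\<^sub>F h in at 0. h \<noteq> 0 \<and> \<bar>h\<bar> < \<rho> - \<bar>s\<bar>"
      using \<rho> by (auto simp: eventually_at intro!: exI[of _ "\<rho> - \<bar>s\<bar>"])
    then show "\<forall>\<^sub>F h in at 0. norm ((F (s + h) - F s) / h - D) \<le> M * \<bar>h\<bar>"
      by eventually_elim (use bound in simp)
    show "((\<lambda>h. M * \<bar>h\<bar>) \<longlongrightarrow> 0) (at 0)"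
      by (auto intro!: tendsto_eq_intros)
  qed
  then have "((\<lambda>h. (F (s + h) - F s) / h) \<longlongrightarrow> D) (at 0)" by (simp add: LIM_zero_iff)
  then show "((\<lambda>z. \<Sum>\<^sub>\<infinity>i. w i * z ^ e i) has_real_derivative D) (at s)"
    unfolding DERIV_def F_def by simp
qed

type_synonym pt = "(real \<times> real) \<times> real"

definition ser3 :: "(nat \<Rightarrow> nat \<Rightarrow> nat \<Rightarrow> real) \<Rightarrow> pt \<Rightarrow> real \<Rightarrow> (pt \<Rightarrow> real) \<Rightarrow> bool" where
  "ser3 c a r F \<longleftrightarrow> (\<forall>p\<in>ball a r. ((\<lambda>(i,j,k). c i j k * (fst (fst p) - fst (fst a)) ^ i
                               * (snd (fst p) - snd (fst a)) ^ j * (snd p - snd a) ^ k)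
                          has_sum F p) UNIV)"

definition Dt :: "(pt \<Rightarrow> real) \<Rightarrow> pt \<Rightarrow> real" where
  "Dt F p = deriv (\<lambda>s. F (fst p, s)) (snd p)"
definition Dx :: "(pt \<Rightarrow> real) \<Rightarrow> pt \<Rightarrow> real" where
  "Dx F p = deriv (\<lambda>r. F ((r, snd (fst p)), snd p)) (fst (fst p))"
definition Dy :: "(pt \<Rightarrow> real) \<Rightarrow> pt \<Rightarrow> real" where
  "Dy F p = deriv (\<lambda>r. F ((fst (fst p), r), snd p)) (snd (fst p))"

lemma has_sum_shift:
  fixes f :: "'a \<Rightarrow> real" and h :: "'b \<Rightarrow> 'a"
  assumes "inj h" "\<And>x. x \<notin> range h \<Longrightarrow> f x = 0" "(f has_sum S) UNIV"
  shows "((f \<circ> h) has_sum S) UNIV"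
proof -
  have "(f has_sum S) (range h)"
    using has_sum_cong_neutral[of UNIV "range h" f f] assms(2,3) by auto
  then show ?thesis using has_sum_reindex[of h UNIV f S] assms(1) by simp
qed

lemma dist3: "dist ((x::real, y::real), t::real) ((ax, ay), a3) = sqrt ((x - ax)\<^sup>2 + (y - ay)\<^sup>2 + (t - a3)\<^sup>2)"
  by (simp add: dist_Pair_Pair dist_real_def)

lemma bigger_point:
  fixes A B T r :: real
  assumes "sqrt (A\<^sup>2 + B\<^sup>2 + T\<^sup>2) < r"
  shows "\<exists>K. \<bar>T\<bar> < K \<and> sqrt (A\<^sup>2 + B\<^sup>2 + K\<^sup>2) < r"
proof -
  define d where "d = r - sqrt (A\<^sup>2 + B\<^sup>2 + T\<^sup>2)"
  have d: "d > 0" using assms by (simp add: d_def)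
  define K where "K = \<bar>T\<bar> + d / 2"
  have "sqrt (A\<^sup>2 + B\<^sup>2 + K\<^sup>2) = dist ((A, B), K) ((0, 0), 0)" by (simp add: dist3)
  also have "\<dots> \<le> dist ((A, B), K) ((A, B), \<bar>T\<bar>) + dist ((A, B), \<bar>T\<bar>) ((0,0),0)" by (rule dist_triangle)
  also have "dist ((A, B), K) ((A, B), \<bar>T\<bar>) = d / 2" using d by (simp add: dist3 K_def)
  also have "dist ((A, B), \<bar>T\<bar>) ((0,0),0) = sqrt (A\<^sup>2 + B\<^sup>2 + T\<^sup>2)" by (simp add: dist3)
  finally have "sqrt (A\<^sup>2 + B\<^sup>2 + K\<^sup>2) \<le> d / 2 + sqrt (A\<^sup>2 + B\<^sup>2 + T\<^sup>2)" by simp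
  then have "sqrt (A\<^sup>2 + B\<^sup>2 + K\<^sup>2) < r" using d d_def by linarith
  moreover have "\<bar>T\<bar> < K" using d by (simp add: K_def)
  ultimately show ?thesis by blast
qed

lemma ser3_Dt_aux:
  assumes S: "ser3 c a r F" and p: "p \<in> ball a r"
  shows "\<exists>D. ((\<lambda>s. F (fst p, s)) has_real_derivative D) (at (snd p)) \<and>
    ((\<lambda>(i,j,k). real (k+1) * c i j (k+1) * (fst (fst p) - fst (fst a)) ^ i
        * (snd (fst p) - snd (fst a)) ^ j * (snd p - snd a) ^ k) has_sum D) UNIV"
proof -
  obtain x y t where pe: "p = ((x, y), t)" by (metis prod.collapse)
  obtain ax ay a3 where ae: "a = ((ax, ay), a3)" by (metis prod.collapse)
  define X Y T where "X = x - ax" "Y = y - ay" "T = t - a3"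
  have "sqrt (X\<^sup>2 + Y\<^sup>2 + T\<^sup>2) < r" using p by (simp add: pe ae dist3 X_Y_T_def power2_commute)
  then obtain K where K: "\<bar>T\<bar> < K" "sqrt (X\<^sup>2 + Y\<^sup>2 + K\<^sup>2) < r" using bigger_point by blast
  define w where "w = (\<lambda>(i::nat,j::nat,k::nat). c i j k * X ^ i * Y ^ j)"
  define e where "e = (\<lambda>(i::nat,j::nat,k::nat). k)"
  have qb: "((x, y), a3 + K) \<in> ball a r" using K by (simp add: ae dist3 X_Y_T_def power2_commute)
  have "((\<lambda>(i,j,k). c i j k * X ^ i * Y ^ j * K ^ k) has_sum F ((x, y), a3 + K)) UNIV"
    using bspec[OF S[unfolded ser3_def] qb] by (simp add: ae X_Y_T_def)
  moreover have "(\<lambda>(i,j,k). c i j k * X ^ i * Y ^ j * K ^ k) = (\<lambda>\<iota>. w \<iota> * K ^ e \<iota>)"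
    by (simp add: fun_eq_iff w_def e_def split_beta)
  ultimately have sK: "(\<lambda>\<iota>. w \<iota> * K ^ e \<iota>) summable_on UNIV" by (metis has_sum_imp_summable)
  note G = gen_deriv[OF sK K(1)]
  define D where "D = (\<Sum>\<^sub>\<infinity>\<iota>. w \<iota> * real (e \<iota>) * T ^ (e \<iota> - 1))"
  define V where "V = {s. dist ((x, y), s) a < r}"
  have Vo: "open V" unfolding V_def by (intro open_Collect_less continuous_intros)
  have tV: "t \<in> V" using p by (simp add: V_def pe dist_commute)
  have eqV: "F ((x, y), s) = (\<Sum>\<^sub>\<infinity>\<iota>. w \<iota> * (s - a3) ^ e \<iota>)" if "s \<in> V" for s
  proof -
    have sb: "((x, y), s) \<in> ball a r" using that by (simp add: V_def dist_commute)
    have "((\<lambda>(i,j,k). c i j k * X ^ i * Y ^ j * (s - a3) ^ k) has_sum F ((x, y), s)) UNIV"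
      using bspec[OF S[unfolded ser3_def] sb] by (simp add: ae X_Y_T_def)
    moreover have "(\<lambda>(i,j,k). c i j k * X ^ i * Y ^ j * (s - a3) ^ k) = (\<lambda>\<iota>. w \<iota> * (s - a3) ^ e \<iota>)"
      by (simp add: fun_eq_iff w_def e_def split_beta)
    ultimately show ?thesis by (simp add: infsumI)
  qed
  have g1: "((\<lambda>s. s - a3) has_real_derivative 1) (at t)" by (auto intro!: derivative_eq_intros)
  have g2: "((\<lambda>z. \<Sum>\<^sub>\<infinity>\<iota>. w \<iota> * z ^ e \<iota>) has_real_derivative D) (at (t - a3))"
    using G(2) by (simp add: D_def X_Y_T_def)
  have "((\<lambda>s. (\<Sum>\<^sub>\<infinity>\<iota>. w \<iota> * (s - a3) ^ e \<iota>)) has_real_derivative D * 1) (at t)"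
    using DERIV_chain2[OF g2 g1] by simp
  have d1: "((\<lambda>s. F ((x, y), s)) has_real_derivative D) (at t)"
  proof (rule has_field_derivative_transform_within_open[OF _ Vo tV])
    show "((\<lambda>s. \<Sum>\<^sub>\<infinity>\<iota>. w \<iota> * (s - a3) ^ e \<iota>) has_real_derivative D) (at t)"
      using \<open>((\<lambda>s. (\<Sum>\<^sub>\<infinity>\<iota>. w \<iota> * (s - a3) ^ e \<iota>)) has_real_derivative D * 1) (at t)\<close> by simp
    show "\<And>s. s \<in> V \<Longrightarrow> (\<Sum>\<^sub>\<infinity>\<iota>. w \<iota> * (s - a3) ^ e \<iota>) = F ((x, y), s)"
      using eqV by simp
  qed
  have hD: "((\<lambda>\<iota>. w \<iota> * real (e \<iota>) * T ^ (e \<iota> - 1)) has_sum D) UNIV"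
    using G(1) unfolding D_def by (rule has_sum_infsum)
  define f where "f = (\<lambda>\<iota>. w \<iota> * real (e \<iota>) * T ^ (e \<iota> - 1))"
  define h where "h = (\<lambda>(i::nat,j::nat,k::nat). (i, j, Suc k))"
  have "inj h" unfolding h_def inj_def by auto
  moreover have fz: "f z = 0" if "z \<notin> range h" for z
  proof -
    obtain i j k where z: "z = (i, j, k)" by (metis prod.collapse)
    have "k = 0"
    proof (rule ccontr)
      assume "k \<noteq> 0"
      then have "z = h (i, j, k - 1)" by (simp add: h_def z)
      then show False using that by auto
    qed
    then show ?thesis by (simp add: f_def z e_def)
  qed
  ultimately have "((f \<circ> h) has_sum D) UNIV" using has_sum_shift[of h f D] fz hD unfolding f_def by blast
  moreover have "f \<circ> h = (\<lambda>(i,j,k). real (k+1) * c i j (k+1) * X ^ i * Y ^ j * T ^ k)"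
    by (simp add: fun_eq_iff f_def h_def w_def e_def split_beta mult_ac)
  ultimately show ?thesis using d1 by (intro exI[of _ D]) (simp add: pe ae X_Y_T_def)
qed

lemma ser3_Dx_aux:
  assumes S: "ser3 c a r F" and p: "p \<in> ball a r"
  shows "\<exists>D. ((\<lambda>s. F ((s, snd (fst p)), snd p)) has_real_derivative D) (at (fst (fst p))) \<and>
    ((\<lambda>(i,j,k). real (i+1) * c (i+1) j k * (fst (fst p) - fst (fst a)) ^ i
        * (snd (fst p) - snd (fst a)) ^ j * (snd p - snd a) ^ k) has_sum D) UNIV"
proof -
  obtain x y t where pe: "p = ((x, y), t)" by (metis prod.collapse)
  obtain ax ay a3 where ae: "a = ((ax, ay), a3)" by (metis prod.collapse)
  define X Y T where "X = x - ax" "Y = y - ay" "T = t - a3"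
  have "sqrt (X\<^sup>2 + Y\<^sup>2 + T\<^sup>2) < r" using p by (simp add: pe ae dist3 X_Y_T_def power2_commute)
  then have "sqrt (Y\<^sup>2 + T\<^sup>2 + X\<^sup>2) < r" by (simp add: ac_simps)
  then obtain K where K: "\<bar>X\<bar> < K" "sqrt (Y\<^sup>2 + T\<^sup>2 + K\<^sup>2) < r" using bigger_point by blast
  have K2: "sqrt (K\<^sup>2 + Y\<^sup>2 + T\<^sup>2) < r" using K(2) by (simp add: ac_simps)
  define w where "w = (\<lambda>(i::nat,j::nat,k::nat). c i j k * Y ^ j * T ^ k)"
  define e where "e = (\<lambda>(i::nat,j::nat,k::nat). i)"
  have qb: "((ax + K, y), t) \<in> ball a r" using K2 by (simp add: ae dist3 X_Y_T_def power2_commute)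
  have "((\<lambda>(i,j,k). c i j k * K ^ i * Y ^ j * T ^ k) has_sum F ((ax + K, y), t)) UNIV"
    using bspec[OF S[unfolded ser3_def] qb] by (simp add: ae X_Y_T_def)
  moreover have "(\<lambda>(i,j,k). c i j k * K ^ i * Y ^ j * T ^ k) = (\<lambda>\<iota>. w \<iota> * K ^ e \<iota>)"
    by (simp add: fun_eq_iff w_def e_def split_beta mult_ac)
  ultimately have sK: "(\<lambda>\<iota>. w \<iota> * K ^ e \<iota>) summable_on UNIV" by (metis has_sum_imp_summable)
  note G = gen_deriv[OF sK K(1)]
  define D where "D = (\<Sum>\<^sub>\<infinity>\<iota>. w \<iota> * real (e \<iota>) * X ^ (e \<iota> - 1))"
  define V where "V = {s. dist ((s, y), t) a < r}"
  have Vo: "open V" unfolding V_def by (intro open_Collect_less continuous_intros)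
  have tV: "x \<in> V" using p by (simp add: V_def pe dist_commute)
  have eqV: "F ((s, y), t) = (\<Sum>\<^sub>\<infinity>\<iota>. w \<iota> * (s - ax) ^ e \<iota>)" if "s \<in> V" for s
  proof -
    have sb: "((s, y), t) \<in> ball a r" using that by (simp add: V_def dist_commute)
    have "((\<lambda>(i,j,k). c i j k * (s - ax) ^ i * Y ^ j * T ^ k) has_sum F ((s, y), t)) UNIV"
      using bspec[OF S[unfolded ser3_def] sb] by (simp add: ae X_Y_T_def)
    moreover have "(\<lambda>(i,j,k). c i j k * (s - ax) ^ i * Y ^ j * T ^ k) = (\<lambda>\<iota>. w \<iota> * (s - ax) ^ e \<iota>)"
      by (simp add: fun_eq_iff w_def e_def split_beta mult_ac)
    ultimately show ?thesis by (simp add: infsumI)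
  qed
  have g1: "((\<lambda>s. s - ax) has_real_derivative 1) (at x)" by (auto intro!: derivative_eq_intros)
  have g2: "((\<lambda>z. \<Sum>\<^sub>\<infinity>\<iota>. w \<iota> * z ^ e \<iota>) has_real_derivative D) (at (x - ax))"
    using G(2) by (simp add: D_def X_Y_T_def)
  have g3: "((\<lambda>s. (\<Sum>\<^sub>\<infinity>\<iota>. w \<iota> * (s - ax) ^ e \<iota>)) has_real_derivative D * 1) (at x)"
    using DERIV_chain2[OF g2 g1] by simp
  have d1: "((\<lambda>s. F ((s, y), t)) has_real_derivative D) (at x)"
  proof (rule has_field_derivative_transform_within_open[OF _ Vo tV])
    show "((\<lambda>s. \<Sum>\<^sub>\<infinity>\<iota>. w \<iota> * (s - ax) ^ e \<iota>) has_real_derivative D) (at x)"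
      using g3 by simp
    show "\<And>s. s \<in> V \<Longrightarrow> (\<Sum>\<^sub>\<infinity>\<iota>. w \<iota> * (s - ax) ^ e \<iota>) = F ((s, y), t)"
      using eqV by simp
  qed
  have hD: "((\<lambda>\<iota>. w \<iota> * real (e \<iota>) * X ^ (e \<iota> - 1)) has_sum D) UNIV"
    using G(1) unfolding D_def by (rule has_sum_infsum)
  define f where "f = (\<lambda>\<iota>. w \<iota> * real (e \<iota>) * X ^ (e \<iota> - 1))"
  define h where "h = (\<lambda>(i::nat,j::nat,k::nat). (Suc i, j, k))"
  have "inj h" unfolding h_def inj_def by auto
  moreover have fz: "f z = 0" if "z \<notin> range h" for z
  proof -
    obtain i j k where z: "z = (i, j, k)" by (metis prod.collapse)
    have "i = 0"
    proof (rule ccontr)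
      assume "i \<noteq> 0"
      then have "z = h (i - 1, j, k)" by (simp add: h_def z)
      then show False using that by auto
    qed
    then show ?thesis by (simp add: f_def z e_def)
  qed
  ultimately have "((f \<circ> h) has_sum D) UNIV" using has_sum_shift[of h f D] fz hD unfolding f_def by blast
  moreover have "f \<circ> h = (\<lambda>(i,j,k). real (i+1) * c (i+1) j k * X ^ i * Y ^ j * T ^ k)"
    by (simp add: fun_eq_iff f_def h_def w_def e_def split_beta mult_ac)
  ultimately show ?thesis using d1 by (intro exI[of _ D]) (simp add: pe ae X_Y_T_def)
qed

lemma ser3_Dy_aux:
  assumes S: "ser3 c a r F" and p: "p \<in> ball a r"
  shows "\<exists>D. ((\<lambda>s. F ((fst (fst p), s), snd p)) has_real_derivative D) (at (snd (fst p))) \<and>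
    ((\<lambda>(i,j,k). real (j+1) * c i (j+1) k * (fst (fst p) - fst (fst a)) ^ i
        * (snd (fst p) - snd (fst a)) ^ j * (snd p - snd a) ^ k) has_sum D) UNIV"
proof -
  obtain x y t where pe: "p = ((x, y), t)" by (metis prod.collapse)
  obtain ax ay a3 where ae: "a = ((ax, ay), a3)" by (metis prod.collapse)
  define X Y T where "X = x - ax" "Y = y - ay" "T = t - a3"
  have "sqrt (X\<^sup>2 + Y\<^sup>2 + T\<^sup>2) < r" using p by (simp add: pe ae dist3 X_Y_T_def power2_commute)
  then have "sqrt (X\<^sup>2 + T\<^sup>2 + Y\<^sup>2) < r" by (simp add: ac_simps)
  then obtain K where K: "\<bar>Y\<bar> < K" "sqrt (X\<^sup>2 + T\<^sup>2 + K\<^sup>2) < r" using bigger_point by blast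
  have K2: "sqrt (X\<^sup>2 + K\<^sup>2 + T\<^sup>2) < r" using K(2) by (simp add: ac_simps)
  define w where "w = (\<lambda>(i::nat,j::nat,k::nat). c i j k * X ^ i * T ^ k)"
  define e where "e = (\<lambda>(i::nat,j::nat,k::nat). j)"
  have qb: "((x, ay + K), t) \<in> ball a r" using K2 by (simp add: ae dist3 X_Y_T_def power2_commute)
  have "((\<lambda>(i,j,k). c i j k * X ^ i * K ^ j * T ^ k) has_sum F ((x, ay + K), t)) UNIV"
    using bspec[OF S[unfolded ser3_def] qb] by (simp add: ae X_Y_T_def)
  moreover have "(\<lambda>(i,j,k). c i j k * X ^ i * K ^ j * T ^ k) = (\<lambda>\<iota>. w \<iota> * K ^ e \<iota>)"
    by (simp add: fun_eq_iff w_def e_def split_beta mult_ac)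
  ultimately have sK: "(\<lambda>\<iota>. w \<iota> * K ^ e \<iota>) summable_on UNIV" by (metis has_sum_imp_summable)
  note G = gen_deriv[OF sK K(1)]
  define D where "D = (\<Sum>\<^sub>\<infinity>\<iota>. w \<iota> * real (e \<iota>) * Y ^ (e \<iota> - 1))"
  define V where "V = {s. dist ((x, s), t) a < r}"
  have Vo: "open V" unfolding V_def by (intro open_Collect_less continuous_intros)
  have tV: "y \<in> V" using p by (simp add: V_def pe dist_commute)
  have eqV: "F ((x, s), t) = (\<Sum>\<^sub>\<infinity>\<iota>. w \<iota> * (s - ay) ^ e \<iota>)" if "s \<in> V" for s
  proof -
    have sb: "((x, s), t) \<in> ball a r" using that by (simp add: V_def dist_commute)
    have "((\<lambda>(i,j,k). c i j k * X ^ i * (s - ay) ^ j * T ^ k) has_sum F ((x, s), t)) UNIV"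
      using bspec[OF S[unfolded ser3_def] sb] by (simp add: ae X_Y_T_def)
    moreover have "(\<lambda>(i,j,k). c i j k * X ^ i * (s - ay) ^ j * T ^ k) = (\<lambda>\<iota>. w \<iota> * (s - ay) ^ e \<iota>)"
      by (simp add: fun_eq_iff w_def e_def split_beta mult_ac)
    ultimately show ?thesis by (simp add: infsumI)
  qed
  have g1: "((\<lambda>s. s - ay) has_real_derivative 1) (at y)" by (auto intro!: derivative_eq_intros)
  have g2: "((\<lambda>z. \<Sum>\<^sub>\<infinity>\<iota>. w \<iota> * z ^ e \<iota>) has_real_derivative D) (at (y - ay))"
    using G(2) by (simp add: D_def X_Y_T_def)
  have g3: "((\<lambda>s. (\<Sum>\<^sub>\<infinity>\<iota>. w \<iota> * (s - ay) ^ e \<iota>)) has_real_derivative D * 1) (at y)"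
    using DERIV_chain2[OF g2 g1] by simp
  have d1: "((\<lambda>s. F ((x, s), t)) has_real_derivative D) (at y)"
  proof (rule has_field_derivative_transform_within_open[OF _ Vo tV])
    show "((\<lambda>s. \<Sum>\<^sub>\<infinity>\<iota>. w \<iota> * (s - ay) ^ e \<iota>) has_real_derivative D) (at y)"
      using g3 by simp
    show "\<And>s. s \<in> V \<Longrightarrow> (\<Sum>\<^sub>\<infinity>\<iota>. w \<iota> * (s - ay) ^ e \<iota>) = F ((x, s), t)"
      using eqV by simp
  qed
  have hD: "((\<lambda>\<iota>. w \<iota> * real (e \<iota>) * Y ^ (e \<iota> - 1)) has_sum D) UNIV"
    using G(1) unfolding D_def by (rule has_sum_infsum)
  define f where "f = (\<lambda>\<iota>. w \<iota> * real (e \<iota>) * Y ^ (e \<iota> - 1))"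
  define h where "h = (\<lambda>(i::nat,j::nat,k::nat). (i, Suc j, k))"
  have "inj h" unfolding h_def inj_def by auto
  moreover have fz: "f z = 0" if "z \<notin> range h" for z
  proof -
    obtain i j k where z: "z = (i, j, k)" by (metis prod.collapse)
    have "j = 0"
    proof (rule ccontr)
      assume "j \<noteq> 0"
      then have "z = h (i, j - 1, k)" by (simp add: h_def z)
      then show False using that by auto
    qed
    then show ?thesis by (simp add: f_def z e_def)
  qed
  ultimately have "((f \<circ> h) has_sum D) UNIV" using has_sum_shift[of h f D] fz hD unfolding f_def by blast
  moreover have "f \<circ> h = (\<lambda>(i,j,k). real (j+1) * c i (j+1) k * X ^ i * Y ^ j * T ^ k)"
    by (simp add: fun_eq_iff f_def h_def w_def e_def split_beta mult_ac)
  ultimately show ?thesis using d1 by (intro exI[of _ D]) (simp add: pe ae X_Y_T_def)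
qed

definition dtc :: "(nat \<Rightarrow> nat \<Rightarrow> nat \<Rightarrow> real) \<Rightarrow> nat \<Rightarrow> nat \<Rightarrow> nat \<Rightarrow> real" where
  "dtc c = (\<lambda>i j k. real (k+1) * c i j (k+1))"
definition dxc :: "(nat \<Rightarrow> nat \<Rightarrow> nat \<Rightarrow> real) \<Rightarrow> nat \<Rightarrow> nat \<Rightarrow> nat \<Rightarrow> real" where
  "dxc c = (\<lambda>i j k. real (i+1) * c (i+1) j k)"
definition dyc :: "(nat \<Rightarrow> nat \<Rightarrow> nat \<Rightarrow> real) \<Rightarrow> nat \<Rightarrow> nat \<Rightarrow> nat \<Rightarrow> real" where
  "dyc c = (\<lambda>i j k. real (j+1) * c i (j+1) k)"

lemma ser3_Dt_has:
  assumes "ser3 c a r F" "p \<in> ball a r"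
  shows "((\<lambda>s. F (fst p, s)) has_real_derivative Dt F p) (at (snd p))"
proof -
  obtain D where D: "((\<lambda>s. F (fst p, s)) has_real_derivative D) (at (snd p))"
    using ser3_Dt_aux[OF assms] by blast
  then have "deriv (\<lambda>s. F (fst p, s)) (snd p) = D" by (rule DERIV_imp_deriv)
  then show ?thesis using D unfolding Dt_def by simp
qed

lemma ser3_Dt:
  assumes "ser3 c a r F"
  shows "ser3 (dtc c) a r (Dt F)"
  unfolding ser3_def
proof
  fix p assume p: "p \<in> ball a r"
  obtain D where D: "((\<lambda>s. F (fst p, s)) has_real_derivative D) (at (snd p))"
    "((\<lambda>(i,j,k). real (k+1) * c i j (k+1) * (fst (fst p) - fst (fst a)) ^ i
        * (snd (fst p) - snd (fst a)) ^ j * (snd p - snd a) ^ k) has_sum D) UNIV"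
    using ser3_Dt_aux[OF assms p] by blast
  have "Dt F p = D" unfolding Dt_def using D(1) by (rule DERIV_imp_deriv)
  then show "((\<lambda>(i,j,k). dtc c i j k * (fst (fst p) - fst (fst a)) ^ i
        * (snd (fst p) - snd (fst a)) ^ j * (snd p - snd a) ^ k) has_sum Dt F p) UNIV"
    using D(2) by (simp add: dtc_def)
qed

lemma ser3_Dx_has:
  assumes "ser3 c a r F" "p \<in> ball a r"
  shows "((\<lambda>s. F ((s, snd (fst p)), snd p)) has_real_derivative Dx F p) (at (fst (fst p)))"
proof -
  obtain D where D: "((\<lambda>s. F ((s, snd (fst p)), snd p)) has_real_derivative D) (at (fst (fst p)))"
    using ser3_Dx_aux[OF assms] by blast
  then have "deriv (\<lambda>s. F ((s, snd (fst p)), snd p)) (fst (fst p)) = D" by (rule DERIV_imp_deriv)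
  then show ?thesis using D unfolding Dx_def by simp
qed

lemma ser3_Dx:
  assumes "ser3 c a r F"
  shows "ser3 (dxc c) a r (Dx F)"
  unfolding ser3_def
proof
  fix p assume p: "p \<in> ball a r"
  obtain D where D: "((\<lambda>s. F ((s, snd (fst p)), snd p)) has_real_derivative D) (at (fst (fst p)))"
    "((\<lambda>(i,j,k). real (i+1) * c (i+1) j k * (fst (fst p) - fst (fst a)) ^ i
        * (snd (fst p) - snd (fst a)) ^ j * (snd p - snd a) ^ k) has_sum D) UNIV"
    using ser3_Dx_aux[OF assms p] by blast
  have "Dx F p = D" unfolding Dx_def using D(1) by (rule DERIV_imp_deriv)
  then show "((\<lambda>(i,j,k). dxc c i j k * (fst (fst p) - fst (fst a)) ^ i
        * (snd (fst p) - snd (fst a)) ^ j * (snd p - snd a) ^ k) has_sum Dx F p) UNIV"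
    using D(2) by (simp add: dxc_def)
qed

lemma ser3_Dy_has:
  assumes "ser3 c a r F" "p \<in> ball a r"
  shows "((\<lambda>s. F ((fst (fst p), s), snd p)) has_real_derivative Dy F p) (at (snd (fst p)))"
proof -
  obtain D where D: "((\<lambda>s. F ((fst (fst p), s), snd p)) has_real_derivative D) (at (snd (fst p)))"
    using ser3_Dy_aux[OF assms] by blast
  then have "deriv (\<lambda>s. F ((fst (fst p), s), snd p)) (snd (fst p)) = D" by (rule DERIV_imp_deriv)
  then show ?thesis using D unfolding Dy_def by simp
qed

lemma ser3_Dy:
  assumes "ser3 c a r F"
  shows "ser3 (dyc c) a r (Dy F)"
  unfolding ser3_def
proof
  fix p assume p: "p \<in> ball a r"
  obtain D where D: "((\<lambda>s. F ((fst (fst p), s), snd p)) has_real_derivative D) (at (snd (fst p)))"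
    "((\<lambda>(i,j,k). real (j+1) * c i (j+1) k * (fst (fst p) - fst (fst a)) ^ i
        * (snd (fst p) - snd (fst a)) ^ j * (snd p - snd a) ^ k) has_sum D) UNIV"
    using ser3_Dy_aux[OF assms p] by blast
  have "Dy F p = D" unfolding Dy_def using D(1) by (rule DERIV_imp_deriv)
  then show "((\<lambda>(i,j,k). dyc c i j k * (fst (fst p) - fst (fst a)) ^ i
        * (snd (fst p) - snd (fst a)) ^ j * (snd p - snd a) ^ k) has_sum Dy F p) UNIV"
    using D(2) by (simp add: dyc_def)
qed

lemma ser3_center:
  assumes "ser3 c a r F" "r > 0"
  shows "F a = c 0 0 0"
proof -
  define g where "g = (\<lambda>(i::nat,j::nat,k::nat). c i j k * (fst (fst a) - fst (fst a)) ^ i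
        * (snd (fst a) - snd (fst a)) ^ j * (snd a - snd a) ^ k)"
  have aa: "a \<in> ball a r" using assms(2) by simp
  have "(g has_sum F a) UNIV" unfolding g_def by (rule bspec[OF assms(1)[unfolded ser3_def] aa])
  moreover have "(g has_sum F a) UNIV \<longleftrightarrow> (g has_sum F a) {(0,0,0)}"
    by (rule has_sum_cong_neutral) (auto simp: g_def)
  ultimately have "(g has_sum F a) {(0,0,0)}" by simp
  moreover have "(g has_sum (sum g {(0,0,0)})) {(0,0,0)}" by (rule has_sum_finite) simp
  ultimately have "F a = sum g {(0,0,0)}" using has_sum_unique by blast
  then show ?thesis by (simp add: g_def)
qed

lemma ser3_line_eq:
  assumes "ser3 c a r F" "ser3 c' a r' G" "\<And>k. c 0 0 k = c' 0 0 k"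
    and "p \<in> ball a r" "p \<in> ball a r'" "fst p = fst a"
  shows "F p = G p"
proof -
  define g where "g = (\<lambda>(i::nat,j::nat,k::nat). c i j k * (fst (fst p) - fst (fst a)) ^ i
        * (snd (fst p) - snd (fst a)) ^ j * (snd p - snd a) ^ k)"
  define g' where "g' = (\<lambda>(i::nat,j::nat,k::nat). c' i j k * (fst (fst p) - fst (fst a)) ^ i
        * (snd (fst p) - snd (fst a)) ^ j * (snd p - snd a) ^ k)"
  have "(g has_sum F p) UNIV" unfolding g_def by (rule bspec[OF assms(1)[unfolded ser3_def] assms(4)])
  moreover have "(g' has_sum G p) UNIV" unfolding g'_def by (rule bspec[OF assms(2)[unfolded ser3_def] assms(5)])
  moreover have "g = g'"
    unfolding g_def g'_def fun_eq_iff using assms(3,6) by (auto simp: zero_power)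
  ultimately show ?thesis using has_sum_unique by blast
qed

lemma dtc_iter: "(dtc ^^ m) c i j k = pochhammer (real k + 1) m * c i j (k + m)"
proof (induction m arbitrary: k)
  case 0 then show ?case by simp
next
  case (Suc m)
  have "(dtc ^^ Suc m) c i j k = real (k+1) * (dtc ^^ m) c i j (k+1)" by (simp add: dtc_def)
  also have "\<dots> = real (k+1) * (pochhammer (real (k+1) + 1) m * c i j (k + 1 + m))" by (simp add: Suc)
  also have "\<dots> = pochhammer (real k + 1) (Suc m) * c i j (k + Suc m)"
    by (simp add: pochhammer_rec add_ac)
  finally show ?case .
qed

lemma dtc_iter0: "(dtc ^^ m) c 0 0 0 = fact m * c 0 0 m"
  by (simp add: dtc_iter pochhammer_fact)

lemma ser3_Dt_iter:
  assumes "ser3 c a r F"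
  shows "ser3 ((dtc ^^ m) c) a r ((Dt ^^ m) F)"
  by (induction m) (auto simp: assms intro: ser3_Dt)

lemma ana3_iff: "real_analytic3_on U F \<longleftrightarrow> open U \<and> (\<forall>a\<in>U. \<exists>r>0. \<exists>c. ball a r \<subseteq> U \<and> ser3 c a r F)"
  unfolding real_analytic3_on_def ser3_def by blast

lemma ana3_Dt: "real_analytic3_on U F \<Longrightarrow> real_analytic3_on U (Dt F)"
  unfolding ana3_iff by (meson ser3_Dt)
lemma ana3_Dx: "real_analytic3_on U F \<Longrightarrow> real_analytic3_on U (Dx F)"
  unfolding ana3_iff by (meson ser3_Dx)
lemma ana3_Dy: "real_analytic3_on U F \<Longrightarrow> real_analytic3_on U (Dy F)"
  unfolding ana3_iff by (meson ser3_Dy)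
lemma ana3_Dt_iter: "real_analytic3_on U F \<Longrightarrow> real_analytic3_on U ((Dt ^^ m) F)"
  by (induction m) (auto intro: ana3_Dt)

lemma ana3_Dt_has:
  assumes "real_analytic3_on U F" "p \<in> U"
  shows "((\<lambda>s. F (fst p, s)) has_real_derivative Dt F p) (at (snd p))"
proof -
  obtain r c where "r > 0" "ser3 c p r F" using assms unfolding ana3_iff by blast
  then show ?thesis using ser3_Dt_has[of c p r F p] by simp
qed
lemma ana3_Dx_has:
  assumes "real_analytic3_on U F" "p \<in> U"
  shows "((\<lambda>s. F ((s, snd (fst p)), snd p)) has_real_derivative Dx F p) (at (fst (fst p)))"
proof -
  obtain r c where "r > 0" "ser3 c p r F" using assms unfolding ana3_iff by blast
  then show ?thesis using ser3_Dx_has[of c p r F p] by simp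
qed
lemma ana3_Dy_has:
  assumes "real_analytic3_on U F" "p \<in> U"
  shows "((\<lambda>s. F ((fst (fst p), s), snd p)) has_real_derivative Dy F p) (at (snd (fst p)))"
proof -
  obtain r c where "r > 0" "ser3 c p r F" using assms unfolding ana3_iff by blast
  then show ?thesis using ser3_Dy_has[of c p r F p] by simp
qed

lemma ana3_Dx_Dt: "real_analytic3_on U F \<Longrightarrow> p \<in> U \<Longrightarrow> Dx (Dt F) p = Dt (Dx F) p"
proof -
  assume A: "real_analytic3_on U F" "p \<in> U"
  obtain r c where rc: "r > 0" "ser3 c p r F" using A unfolding ana3_iff by blast
  have "Dx (Dt F) p = dxc (dtc c) 0 0 0" by (rule ser3_center[OF ser3_Dx[OF ser3_Dt[OF rc(2)]] rc(1)])
  moreover have "Dt (Dx F) p = dtc (dxc c) 0 0 0" by (rule ser3_center[OF ser3_Dt[OF ser3_Dx[OF rc(2)]] rc(1)])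
  ultimately show ?thesis by (simp add: dxc_def dtc_def)
qed

lemma ana3_Dy_Dt: "real_analytic3_on U F \<Longrightarrow> p \<in> U \<Longrightarrow> Dy (Dt F) p = Dt (Dy F) p"
proof -
  assume A: "real_analytic3_on U F" "p \<in> U"
  obtain r c where rc: "r > 0" "ser3 c p r F" using A unfolding ana3_iff by blast
  have "Dy (Dt F) p = dyc (dtc c) 0 0 0" by (rule ser3_center[OF ser3_Dy[OF ser3_Dt[OF rc(2)]] rc(1)])
  moreover have "Dt (Dy F) p = dtc (dyc c) 0 0 0" by (rule ser3_center[OF ser3_Dt[OF ser3_Dy[OF rc(2)]] rc(1)])
  ultimately show ?thesis by (simp add: dyc_def dtc_def)
qed

lemma pow_small:
  fixes \<rho> \<rho>0 :: real
  assumes "0 \<le> \<rho>" "\<rho> \<le> \<rho>0" "0 < \<rho>0" "n \<ge> 1"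
  shows "\<rho> ^ n \<le> (\<rho> / \<rho>0) * \<rho>0 ^ n"
proof -
  obtain m where n: "n = Suc m" using assms(4) by (cases n) auto
  have "\<rho> ^ n = \<rho> * \<rho> ^ m" by (simp add: n)
  also have "\<dots> \<le> \<rho> * \<rho>0 ^ m" using assms by (intro mult_left_mono power_mono) auto
  also have "\<dots> = (\<rho> / \<rho>0) * \<rho>0 ^ n" using assms(3) by (simp add: n)
  finally show ?thesis .
qed

lemma coord_le_dist:
  "\<bar>fst (fst p) - fst (fst a)\<bar> \<le> dist p a \<and> \<bar>snd (fst p) - snd (fst a)\<bar> \<le> dist p a \<and> \<bar>snd p - snd a\<bar> \<le> dist p a"
proof -
  obtain x y t where pe: "p = ((x, y), t)" by (metis prod.collapse)
  obtain ax ay a3 where ae: "a = ((ax, ay), a3)" by (metis prod.collapse)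
  have d: "dist p a = sqrt ((x - ax)\<^sup>2 + (y - ay)\<^sup>2 + (t - a3)\<^sup>2)" by (simp add: pe ae dist3)
  have "\<bar>x - ax\<bar> = sqrt ((x - ax)\<^sup>2)" by simp
  also have "\<dots> \<le> dist p a" unfolding d by (rule real_sqrt_le_mono) simp
  finally have 1: "\<bar>x - ax\<bar> \<le> dist p a" .
  have "\<bar>y - ay\<bar> = sqrt ((y - ay)\<^sup>2)" by simp
  also have "\<dots> \<le> dist p a" unfolding d by (rule real_sqrt_le_mono) simp
  finally have 2: "\<bar>y - ay\<bar> \<le> dist p a" .
  have "\<bar>t - a3\<bar> = sqrt ((t - a3)\<^sup>2)" by simp
  also have "\<dots> \<le> dist p a" unfolding d by (rule real_sqrt_le_mono) simp
  finally have 3: "\<bar>t - a3\<bar> \<le> dist p a" .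
  show ?thesis using 1 2 3 by (simp add: pe ae)
qed

lemma ser3_cont:
  assumes S: "ser3 c a r F" and r: "r > 0"
  shows "isCont F a"
proof -
  obtain ax ay a3 where ae: "a = ((ax, ay), a3)" by (metis prod.collapse)
  define \<rho>0 where "\<rho>0 = r / 2"
  have \<rho>0: "\<rho>0 > 0" using r by (simp add: \<rho>0_def)
  define q0 where "q0 = ((ax + \<rho>0, ay + \<rho>0), a3 + \<rho>0)"
  have "dist q0 a = sqrt (\<rho>0\<^sup>2 + \<rho>0\<^sup>2 + \<rho>0\<^sup>2)" by (simp add: q0_def ae dist3)
  also have "\<dots> < sqrt (r\<^sup>2)"
    by (rule real_sqrt_less_mono) (use \<rho>0 in \<open>simp add: \<rho>0_def power2_eq_square field_simps\<close>)
  also have "\<dots> = r" using r by simp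
  finally have q0b: "q0 \<in> ball a r" by (simp add: dist_commute)
  define N where "N = (\<lambda>(i::nat,j::nat,k::nat). \<bar>c i j k\<bar> * \<rho>0 ^ i * \<rho>0 ^ j * \<rho>0 ^ k)"
  have "((\<lambda>(i,j,k). c i j k * \<rho>0 ^ i * \<rho>0 ^ j * \<rho>0 ^ k) has_sum F q0) UNIV"
    using bspec[OF S[unfolded ser3_def] q0b] by (simp add: q0_def ae)
  then have "(\<lambda>\<iota>. norm ((\<lambda>(i,j,k). c i j k * \<rho>0 ^ i * \<rho>0 ^ j * \<rho>0 ^ k) \<iota>)) summable_on UNIV"
    using summable_on_iff_abs_summable_on_real[THEN iffD1] has_sum_imp_summable by blast
  moreover have "(\<lambda>\<iota>. norm ((\<lambda>(i,j,k). c i j k * \<rho>0 ^ i * \<rho>0 ^ j * \<rho>0 ^ k) \<iota>)) = N"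
    using \<rho>0 by (simp add: fun_eq_iff N_def split_beta abs_mult)
  ultimately have sN: "N summable_on UNIV" by simp
  define M0 where "M0 = infsum N UNIV"
  have M0: "M0 \<ge> 0" unfolding M0_def by (rule infsum_nonneg) (use \<rho>0 in \<open>auto simp: N_def split_beta\<close>)
  have Fa: "F a = c 0 0 0" by (rule ser3_center[OF S r])
  have main: "\<bar>F p - F a\<bar> \<le> (dist p a / \<rho>0) * M0" if pd: "dist p a < \<rho>0" for p
  proof -
    define \<rho> where "\<rho> = dist p a"
    have pb: "p \<in> ball a r" using pd \<rho>0 by (simp add: \<rho>0_def dist_commute)
    define fam where "fam = (\<lambda>(i::nat,j::nat,k::nat). c i j k * (fst (fst p) - fst (fst a)) ^ i
        * (snd (fst p) - snd (fst a)) ^ j * (snd p - snd a) ^ k)"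
    have hp: "(fam has_sum F p) UNIV" unfolding fam_def by (rule bspec[OF S[unfolded ser3_def] pb])
    define d0 where "d0 = (\<lambda>\<iota>::nat\<times>nat\<times>nat. if \<iota> = (0,0,0) then c 0 0 0 else 0)"
    have "(d0 has_sum c 0 0 0) UNIV \<longleftrightarrow> (d0 has_sum c 0 0 0) {(0,0,0)}"
      by (rule has_sum_cong_neutral) (auto simp: d0_def)
    moreover have "(d0 has_sum (sum d0 {(0,0,0)})) {(0,0,0)}" by (rule has_sum_finite) simp
    ultimately have h0: "(d0 has_sum c 0 0 0) UNIV" by (simp add: d0_def)
    define g where "g = (\<lambda>\<iota>. fam \<iota> - d0 \<iota>)"
    have hg: "(g has_sum (F p - F a)) UNIV" unfolding g_def Fa by (rule has_sum_diff'[OF hp h0])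
    have cb: "\<bar>fst (fst p) - fst (fst a)\<bar> \<le> \<rho>" "\<bar>snd (fst p) - snd (fst a)\<bar> \<le> \<rho>" "\<bar>snd p - snd a\<bar> \<le> \<rho>"
      using coord_le_dist[of p a] by (auto simp: \<rho>_def)
    have gb: "\<bar>g \<iota>\<bar> \<le> (\<rho> / \<rho>0) * N \<iota>" for \<iota>
    proof -
      obtain i j k where z: "\<iota> = (i, j, k)" by (metis prod.collapse)
      show ?thesis
      proof (cases "\<iota> = (0,0,0)")
        case True
        then show ?thesis using \<rho>0 by (simp add: g_def fam_def d0_def N_def \<rho>_def)
      next
        case False
        then have n1: "i + j + k \<ge> 1" by (auto simp: z)
        have "\<bar>g \<iota>\<bar> = \<bar>c i j k\<bar> * (\<bar>fst (fst p) - fst (fst a)\<bar> ^ i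
            * \<bar>snd (fst p) - snd (fst a)\<bar> ^ j * \<bar>snd p - snd a\<bar> ^ k)"
          using False by (simp add: g_def fam_def d0_def z abs_mult power_abs del: prod.inject)
        also have "\<dots> \<le> \<bar>c i j k\<bar> * (\<rho> ^ i * \<rho> ^ j * \<rho> ^ k)"
          using cb by (intro mult_left_mono mult_mono power_mono) auto
        also have "\<dots> = \<bar>c i j k\<bar> * \<rho> ^ (i + j + k)" by (simp add: power_add)
        also have "\<dots> \<le> \<bar>c i j k\<bar> * ((\<rho> / \<rho>0) * \<rho>0 ^ (i + j + k))"
          by (intro mult_left_mono pow_small) (use pd \<rho>0 n1 in \<open>auto simp: \<rho>_def\<close>)
        also have "\<dots> = (\<rho> / \<rho>0) * N \<iota>" by (simp add: N_def z power_add mult_ac)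
        finally show ?thesis .
      qed
    qed
    have nT: "(\<lambda>\<iota>. norm (g \<iota>)) summable_on UNIV"
      using hg summable_on_iff_abs_summable_on_real[THEN iffD1] has_sum_imp_summable by blast
    have "\<bar>F p - F a\<bar> \<le> infsum (\<lambda>\<iota>. norm (g \<iota>)) UNIV"
      using norm_has_sum_bound[OF has_sum_infsum[OF nT] hg] by simp
    also have "\<dots> \<le> infsum (\<lambda>\<iota>. (\<rho> / \<rho>0) * N \<iota>) UNIV"
      by (rule infsum_mono[OF nT summable_on_cmult_right[OF sN]]) (use gb in simp)
    also have "\<dots> = (\<rho> / \<rho>0) * M0" unfolding M0_def by (rule infsum_cmult_right[OF sN])
    finally show ?thesis by (simp add: \<rho>_def)
  qed
  show ?thesis
    unfolding continuous_at_eps_delta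
  proof (intro allI impI)
    fix e :: real assume e: "e > 0"
    define \<delta> where "\<delta> = min \<rho>0 (e * \<rho>0 / (M0 + 1))"
    have \<delta>: "\<delta> > 0" using e \<rho>0 M0 by (simp add: \<delta>_def)
    have "dist (F p) (F a) < e" if "dist p a < \<delta>" for p
    proof -
      have "dist p a < \<rho>0" using that by (simp add: \<delta>_def)
      then have "\<bar>F p - F a\<bar> \<le> (dist p a / \<rho>0) * M0" by (rule main)
      also have "\<dots> \<le> ((e * \<rho>0 / (M0 + 1)) / \<rho>0) * M0"
        using that \<rho>0 M0 by (intro mult_right_mono divide_right_mono) (auto simp: \<delta>_def)
      also have "(e * \<rho>0 / (M0 + 1)) / \<rho>0 = e / (M0 + 1)" using \<rho>0 by simp
      also have "e / (M0 + 1) * M0 = e * (M0 / (M0 + 1))" by simp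
      also have "\<dots> < e" using e M0 by (simp add: field_simps)
      finally show ?thesis by (simp add: dist_real_def)
    qed
    then show "\<exists>\<delta>>0. \<forall>x'. dist x' a < \<delta> \<longrightarrow> dist (F x') (F a) < e" using \<delta> by blast
  qed
qed

lemma ana3_cont: "real_analytic3_on U F \<Longrightarrow> continuous_on U F"
proof (rule continuous_at_imp_continuous_on, rule ballI)
  fix a assume A: "real_analytic3_on U F" and aU: "a \<in> U"
  have "\<forall>a\<in>U. \<exists>r>0. \<exists>c. ball a r \<subseteq> U \<and> ser3 c a r F" using A unfolding ana3_iff by (rule conjunct2)
  then have "\<exists>r>0. \<exists>c. ball a r \<subseteq> U \<and> ser3 c a r F" using aU by (rule bspec)
  then obtain r c where "r > 0" "ser3 c a r F" by blast
  then show "isCont F a" by (rule ser3_cont[rotated])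
qed

definition smooth1 :: "real set \<Rightarrow> (real \<Rightarrow> real) \<Rightarrow> bool" where
  "smooth1 J u \<longleftrightarrow> open J \<and> (\<forall>m. \<forall>s\<in>J. ((deriv ^^ m) u has_real_derivative (deriv ^^ Suc m) u s) (at s))"

definition small :: "nat \<Rightarrow> (real \<Rightarrow> real) \<Rightarrow> bool" where
  "small n u \<longleftrightarrow> (\<forall>e>0. \<exists>d>0. \<forall>t. \<bar>t\<bar> < d \<longrightarrow> \<bar>u t\<bar> \<le> e * \<bar>t\<bar> ^ n)"

lemma smallD: "small n u \<Longrightarrow> e > 0 \<Longrightarrow> \<exists>d>0. \<forall>t. \<bar>t\<bar> < d \<longrightarrow> \<bar>u t\<bar> \<le> e * \<bar>t\<bar> ^ n"
  unfolding small_def by blast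

lemma small_add:
  assumes "small n u" "small n v"
  shows "small n (\<lambda>t. u t + v t)"
  unfolding small_def
proof (intro allI impI)
  fix e :: real assume e: "e > 0"
  obtain d1 where d1: "d1 > 0" "\<And>t. \<bar>t\<bar> < d1 \<Longrightarrow> \<bar>u t\<bar> \<le> (e/2) * \<bar>t\<bar> ^ n"
    using smallD[OF assms(1), of "e/2"] e by auto
  obtain d2 where d2: "d2 > 0" "\<And>t. \<bar>t\<bar> < d2 \<Longrightarrow> \<bar>v t\<bar> \<le> (e/2) * \<bar>t\<bar> ^ n"
    using smallD[OF assms(2), of "e/2"] e by auto
  show "\<exists>d>0. \<forall>t. \<bar>t\<bar> < d \<longrightarrow> \<bar>u t + v t\<bar> \<le> e * \<bar>t\<bar> ^ n"
  proof (intro exI[of _ "min d1 d2"] conjI allI impI)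
    show "min d1 d2 > 0" using d1 d2 by simp
    fix t :: real assume "\<bar>t\<bar> < min d1 d2"
    then have "\<bar>u t\<bar> \<le> (e/2) * \<bar>t\<bar> ^ n" "\<bar>v t\<bar> \<le> (e/2) * \<bar>t\<bar> ^ n" using d1 d2 by auto
    then show "\<bar>u t + v t\<bar> \<le> e * \<bar>t\<bar> ^ n" by linarith
  qed
qed

lemma small_uminus: "small n u \<Longrightarrow> small n (\<lambda>t. - u t)"
  unfolding small_def by simp

lemma small_diff: "small n u \<Longrightarrow> small n v \<Longrightarrow> small n (\<lambda>t. u t - v t)"
  using small_add[of n u "\<lambda>t. - v t"] small_uminus[of n v] by simp

lemma small_cong: "small n u \<Longrightarrow> (\<exists>d>0. \<forall>t. \<bar>t\<bar> < d \<longrightarrow> u t = v t) \<Longrightarrow> small n v"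
  unfolding small_def
proof (intro allI impI)
  fix e :: real
  assume A: "\<forall>e>0. \<exists>d>0. \<forall>t. \<bar>t\<bar> < d \<longrightarrow> \<bar>u t\<bar> \<le> e * \<bar>t\<bar> ^ n"
    and B: "\<exists>d>0. \<forall>t. \<bar>t\<bar> < d \<longrightarrow> u t = v t" and e: "e > 0"
  obtain d1 where d1: "d1 > 0" "\<And>t. \<bar>t\<bar> < d1 \<Longrightarrow> \<bar>u t\<bar> \<le> e * \<bar>t\<bar> ^ n" using A e by blast
  obtain d2 where d2: "d2 > 0" "\<And>t. \<bar>t\<bar> < d2 \<Longrightarrow> u t = v t" using B by blast
  show "\<exists>d>0. \<forall>t. \<bar>t\<bar> < d \<longrightarrow> \<bar>v t\<bar> \<le> e * \<bar>t\<bar> ^ n"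
  proof (intro exI[of _ "min d1 d2"] conjI allI impI)
    show "min d1 d2 > 0" using d1 d2 by simp
    fix t :: real assume "\<bar>t\<bar> < min d1 d2"
    then show "\<bar>v t\<bar> \<le> e * \<bar>t\<bar> ^ n" using d1(2)[of t] d2(2)[of t] by simp
  qed
qed

lemma small_mult_bounded:
  assumes "small n u" and B: "\<exists>B d. d > 0 \<and> (\<forall>t. \<bar>t\<bar> < d \<longrightarrow> \<bar>a t\<bar> \<le> B)"
  shows "small n (\<lambda>t. a t * u t)"
  unfolding small_def
proof (intro allI impI)
  fix e :: real assume e: "e > 0"
  obtain B d0 where Bd: "d0 > 0" "\<And>t. \<bar>t\<bar> < d0 \<Longrightarrow> \<bar>a t\<bar> \<le> B" using B by blast
  define B' where "B' = \<bar>B\<bar> + 1"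
  have B': "B' > 0" by (simp add: B'_def)
  obtain d1 where d1: "d1 > 0" "\<And>t. \<bar>t\<bar> < d1 \<Longrightarrow> \<bar>u t\<bar> \<le> (e / B') * \<bar>t\<bar> ^ n"
    using smallD[OF assms(1), of "e/B'"] e B' by auto
  show "\<exists>d>0. \<forall>t. \<bar>t\<bar> < d \<longrightarrow> \<bar>a t * u t\<bar> \<le> e * \<bar>t\<bar> ^ n"
  proof (intro exI[of _ "min d0 d1"] conjI allI impI)
    show "min d0 d1 > 0" using Bd d1 by simp
    fix t :: real assume t: "\<bar>t\<bar> < min d0 d1"
    have a: "\<bar>a t\<bar> \<le> B'" using Bd(2)[of t] t by (simp add: B'_def)
    have u: "\<bar>u t\<bar> \<le> (e / B') * \<bar>t\<bar> ^ n" using d1(2)[of t] t by simp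
    have "\<bar>a t * u t\<bar> = \<bar>a t\<bar> * \<bar>u t\<bar>" by (simp add: abs_mult)
    also have "\<dots> \<le> B' * ((e / B') * \<bar>t\<bar> ^ n)" using a u by (intro mult_mono) auto
    also have "\<dots> = e * \<bar>t\<bar> ^ n" using B' by simp
    finally show "\<bar>a t * u t\<bar> \<le> e * \<bar>t\<bar> ^ n" .
  qed
qed

lemma small_mono:
  assumes "small n u" "m \<le> n"
  shows "small m u"
  unfolding small_def
proof (intro allI impI)
  fix e :: real assume e: "e > 0"
  obtain d where d: "d > 0" "\<And>t. \<bar>t\<bar> < d \<Longrightarrow> \<bar>u t\<bar> \<le> e * \<bar>t\<bar> ^ n" using smallD[OF assms(1) e] by auto
  show "\<exists>d>0. \<forall>t. \<bar>t\<bar> < d \<longrightarrow> \<bar>u t\<bar> \<le> e * \<bar>t\<bar> ^ m"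
  proof (intro exI[of _ "min d 1"] conjI allI impI)
    show "min d 1 > 0" using d by simp
    fix t :: real assume t: "\<bar>t\<bar> < min d 1"
    have "\<bar>t\<bar> ^ n \<le> \<bar>t\<bar> ^ m" using t assms(2) by (intro power_decreasing) auto
    then show "\<bar>u t\<bar> \<le> e * \<bar>t\<bar> ^ m" using d(2)[of t] t e by (meson min_less_iff_conj mult_left_mono order_trans less_imp_le)
  qed
qed

lemma small_times_t:
  assumes "small n u"
  shows "small (Suc n) (\<lambda>t. t * u t)"
  unfolding small_def
proof (intro allI impI)
  fix e :: real assume e: "e > 0"
  obtain d where d: "d > 0" "\<And>t. \<bar>t\<bar> < d \<Longrightarrow> \<bar>u t\<bar> \<le> e * \<bar>t\<bar> ^ n" using smallD[OF assms(1) e] by auto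
  show "\<exists>d>0. \<forall>t. \<bar>t\<bar> < d \<longrightarrow> \<bar>t * u t\<bar> \<le> e * \<bar>t\<bar> ^ Suc n"
  proof (intro exI[of _ d] conjI allI impI)
    show "d > 0" by fact
    fix t :: real assume t: "\<bar>t\<bar> < d"
    have "\<bar>t * u t\<bar> = \<bar>t\<bar> * \<bar>u t\<bar>" by (simp add: abs_mult)
    also have "\<dots> \<le> \<bar>t\<bar> * (e * \<bar>t\<bar> ^ n)" using d(2)[OF t] by (intro mult_left_mono) auto
    also have "\<dots> = e * \<bar>t\<bar> ^ Suc n" by simp
    finally show "\<bar>t * u t\<bar> \<le> e * \<bar>t\<bar> ^ Suc n" .
  qed
qed

lemma sqrt_diff_le:
  fixes a b c :: real
  assumes "a \<ge> c" "b \<ge> c" "c > 0"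
  shows "\<bar>sqrt a - sqrt b\<bar> \<le> \<bar>a - b\<bar> / sqrt c"
proof -
  have sa: "sqrt a \<ge> sqrt c" "sqrt b \<ge> sqrt c" using assms by auto
  have sc: "sqrt c > 0" using assms by simp
  have "a - b = (sqrt a - sqrt b) * (sqrt a + sqrt b)"
    using assms by (simp add: algebra_simps)
  then have "\<bar>a - b\<bar> = \<bar>sqrt a - sqrt b\<bar> * (sqrt a + sqrt b)"
    using sa sc by (simp add: abs_mult)
  moreover have "sqrt c \<le> sqrt a + sqrt b" using sa sc by linarith
  then have "\<bar>sqrt a - sqrt b\<bar> * sqrt c \<le> \<bar>sqrt a - sqrt b\<bar> * (sqrt a + sqrt b)"
    by (intro mult_left_mono) auto
  ultimately have "\<bar>sqrt a - sqrt b\<bar> * sqrt c \<le> \<bar>a - b\<bar>" by simp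
  then show ?thesis using sc by (simp add: field_simps)
qed

lemma small_sqrt:
  assumes "small n (\<lambda>t. a t - b t)" and c: "c > 0" "d0 > 0"
    and ab: "\<And>t. \<bar>t\<bar> < d0 \<Longrightarrow> a t \<ge> c \<and> b t \<ge> c"
  shows "small n (\<lambda>t. sqrt (a t) - sqrt (b t))"
proof -
  have "small n (\<lambda>t. (1 / sqrt c) * (a t - b t))"
    by (rule small_mult_bounded[OF assms(1)]) (use c in \<open>intro exI[of _ "1 / sqrt c"] exI[of _ 1], auto\<close>)
  then show ?thesis unfolding small_def
  proof (intro allI impI)
    fix e :: real assume A: "\<forall>e>0. \<exists>d>0. \<forall>t. \<bar>t\<bar> < d \<longrightarrow> \<bar>1 / sqrt c * (a t - b t)\<bar> \<le> e * \<bar>t\<bar> ^ n"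
      and e: "e > 0"
    obtain d where d: "d > 0" "\<And>t. \<bar>t\<bar> < d \<Longrightarrow> \<bar>1 / sqrt c * (a t - b t)\<bar> \<le> e * \<bar>t\<bar> ^ n"
      using A e by blast
    show "\<exists>d>0. \<forall>t. \<bar>t\<bar> < d \<longrightarrow> \<bar>sqrt (a t) - sqrt (b t)\<bar> \<le> e * \<bar>t\<bar> ^ n"
    proof (intro exI[of _ "min d d0"] conjI allI impI)
      show "min d d0 > 0" using d c by simp
      fix t :: real assume t: "\<bar>t\<bar> < min d d0"
      have "\<bar>sqrt (a t) - sqrt (b t)\<bar> \<le> \<bar>a t - b t\<bar> / sqrt c"
        using ab[of t] t c by (intro sqrt_diff_le) auto
      also have "\<dots> = \<bar>1 / sqrt c * (a t - b t)\<bar>" using c by (simp add: abs_mult)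
      also have "\<dots> \<le> e * \<bar>t\<bar> ^ n" using d(2)[of t] t by simp
      finally show "\<bar>sqrt (a t) - sqrt (b t)\<bar> \<le> e * \<bar>t\<bar> ^ n" .
    qed
  qed
qed

lemma deriv_funpow_Suc: "(deriv ^^ Suc m) u = deriv ((deriv ^^ m) u)"
  by simp

lemma deriv_funpow_Suc': "(deriv ^^ Suc m) u = (deriv ^^ m) (deriv u)"
  by (simp add: funpow_Suc_right del: funpow.simps)

lemma deriv_local:
  assumes "open J" "\<And>s. s \<in> J \<Longrightarrow> u s = v s" "s \<in> J"
  shows "(deriv ^^ m) u s = (deriv ^^ m) v s"
  using assms(3)
proof (induction m arbitrary: s)
  case 0 then show ?case using assms(2) by simp
next
  case (Suc m)
  have "eventually (\<lambda>x. (deriv ^^ m) u x = (deriv ^^ m) v x) (nhds s)"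
    unfolding eventually_nhds using assms(1) Suc by blast
  then have "deriv ((deriv ^^ m) u) s = deriv ((deriv ^^ m) v) s" by (rule deriv_cong_ev) simp
  then show ?case by simp
qed

lemma smooth1_deriv: "smooth1 J u \<Longrightarrow> smooth1 J (deriv u)"
  unfolding smooth1_def by (metis deriv_funpow_Suc')

lemma smooth1_D: "smooth1 J u \<Longrightarrow> s \<in> J \<Longrightarrow> (u has_real_derivative deriv u s) (at s)"
  unfolding smooth1_def by (metis funpow_0 funpow_Suc_right comp_apply)

lemma smooth1_Dm: "smooth1 J u \<Longrightarrow> s \<in> J \<Longrightarrow> ((deriv ^^ m) u has_real_derivative (deriv ^^ Suc m) u s) (at s)"
  unfolding smooth1_def by blast

lemma smooth1_mono: "smooth1 J u \<Longrightarrow> open J' \<Longrightarrow> J' \<subseteq> J \<Longrightarrow> smooth1 J' u"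
  unfolding smooth1_def by blast

lemma mvt_abs:
  fixes f f' :: "real \<Rightarrow> real"
  assumes "\<And>x. \<bar>x\<bar> \<le> \<bar>t\<bar> \<Longrightarrow> (f has_real_derivative f' x) (at x)"
  shows "\<exists>z. \<bar>z\<bar> \<le> \<bar>t\<bar> \<and> f t - f 0 = t * f' z"
proof (cases "t = 0")
  case True then show ?thesis by (intro exI[of _ 0]) simp
next
  case False
  show ?thesis
  proof (cases "t > 0")
    case True
    obtain z where "0 < z" "z < t" "f t - f 0 = (t - 0) * f' z"
      using MVT2[of 0 t f f'] True assms by force
    then show ?thesis by (intro exI[of _ z]) auto
  next
    case False': False
    then have tn: "t < 0" using False by simp
    obtain z where "t < z" "z < 0" "f 0 - f t = (0 - t) * f' z"
      using MVT2[of t 0 f f'] tn assms by force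
    then show ?thesis by (intro exI[of _ z]) (auto simp: algebra_simps)
  qed
qed

lemma taylor_small:
  assumes "smooth1 J u" "ball 0 r \<subseteq> J" "r > 0" "\<forall>j<n. (deriv ^^ j) u 0 = 0"
  shows "small n (\<lambda>t. u t - (deriv ^^ n) u 0 * t ^ n / fact n)"
  using assms(1,4)
proof (induction n arbitrary: u)
  case 0
  have J0: "0 \<in> J" using assms(2,3) by auto
  have "isCont u 0" using smooth1_D[OF 0(1) J0] by (rule DERIV_isCont)
  then have L: "u \<midarrow>0\<rightarrow> u 0" by (simp add: isCont_def)
  show ?case unfolding small_def
  proof (intro allI impI)
    fix e :: real assume e: "e > 0"
    obtain d where d: "d > 0" "\<And>x. x \<noteq> 0 \<and> norm (x - 0) < d \<Longrightarrow> norm (u x - u 0) < e"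
      using L[unfolded LIM_eq] e by blast
    show "\<exists>d>0. \<forall>t. \<bar>t\<bar> < d \<longrightarrow> \<bar>u t - (deriv ^^ 0) u 0 * t ^ 0 / fact 0\<bar> \<le> e * \<bar>t\<bar> ^ 0"
    proof (intro exI[of _ d] conjI allI impI)
      show "d > 0" by fact
      fix t :: real assume t: "\<bar>t\<bar> < d"
      show "\<bar>u t - (deriv ^^ 0) u 0 * t ^ 0 / fact 0\<bar> \<le> e * \<bar>t\<bar> ^ 0"
        using d(2)[of t] t e by (cases "t = 0") auto
    qed
  qed
next
  case (Suc n)
  define v where "v = deriv u"
  have sv: "smooth1 J v" unfolding v_def by (rule smooth1_deriv[OF Suc.prems(1)])
  have vz: "\<forall>j<n. (deriv ^^ j) v 0 = 0"
    using Suc.prems(2) unfolding v_def by (metis Suc_mono deriv_funpow_Suc')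
  define c where "c = (deriv ^^ n) v 0"
  have c: "(deriv ^^ Suc n) u 0 = c" unfolding c_def v_def deriv_funpow_Suc' ..
  have IH: "small n (\<lambda>t. v t - c * t ^ n / fact n)" using Suc.IH[OF sv vz] by (simp add: c_def)
  define \<psi> where "\<psi> = (\<lambda>t. u t - c * t ^ Suc n / fact (Suc n))"
  have dpsi: "(\<psi> has_real_derivative (v x - c * x ^ n / fact n)) (at x)" if "x \<in> J" for x
  proof -
    have "(\<psi> has_real_derivative (v x - c * (real (Suc n) * x ^ n) / fact (Suc n))) (at x)"
      unfolding \<psi>_def v_def
      by (rule derivative_eq_intros smooth1_D[OF Suc.prems(1) that] | simp)+
    moreover have "c * (real (Suc n) * x ^ n) / fact (Suc n) = c * x ^ n / fact n"
    proof -
      define k where "k = real (Suc n)"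
      have k: "k \<noteq> 0" by (simp add: k_def)
      have f: "(fact (Suc n) :: real) = k * fact n" unfolding k_def by (simp only: fact_Suc of_nat_mult)
      have "c * (k * x ^ n) / (k * fact n) = c * x ^ n / fact n"
        using k by (simp add: mult.left_commute[of c k])
      then show ?thesis unfolding f k_def .
    qed
    ultimately show ?thesis by simp
  qed
  have u0: "u 0 = 0" using Suc.prems(2) by (metis funpow_0 zero_less_Suc)
  show ?case unfolding c small_def
  proof (intro allI impI)
    fix e :: real assume e: "e > 0"
    obtain d where d: "d > 0" "\<And>t. \<bar>t\<bar> < d \<Longrightarrow> \<bar>v t - c * t ^ n / fact n\<bar> \<le> e * \<bar>t\<bar> ^ n"
      using smallD[OF IH e] by blast
    show "\<exists>d>0. \<forall>t. \<bar>t\<bar> < d \<longrightarrow> \<bar>u t - c * t ^ Suc n / fact (Suc n)\<bar> \<le> e * \<bar>t\<bar> ^ Suc n"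
    proof (intro exI[of _ "min d r"] conjI allI impI)
      show "min d r > 0" using d assms(3) by simp
      fix t :: real assume t: "\<bar>t\<bar> < min d r"
      have "\<exists>z. \<bar>z\<bar> \<le> \<bar>t\<bar> \<and> \<psi> t - \<psi> 0 = t * (v z - c * z ^ n / fact n)"
      proof (rule mvt_abs)
        fix x :: real assume "\<bar>x\<bar> \<le> \<bar>t\<bar>"
        then have "x \<in> J" using t assms(2) by (auto simp: subset_iff)
        then show "(\<psi> has_real_derivative (v x - c * x ^ n / fact n)) (at x)" by (rule dpsi)
      qed
      then obtain z where z: "\<bar>z\<bar> \<le> \<bar>t\<bar>" "\<psi> t - \<psi> 0 = t * (v z - c * z ^ n / fact n)" by blast
      have "\<psi> 0 = 0" using u0 by (simp add: \<psi>_def)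
      then have "\<bar>\<psi> t\<bar> = \<bar>t\<bar> * \<bar>v z - c * z ^ n / fact n\<bar>" using z(2) by (simp add: abs_mult)
      also have "\<dots> \<le> \<bar>t\<bar> * (e * \<bar>z\<bar> ^ n)" using d(2)[of z] z(1) t by (intro mult_left_mono) auto
      also have "\<dots> \<le> \<bar>t\<bar> * (e * \<bar>t\<bar> ^ n)"
        using z(1) e by (intro mult_left_mono power_mono) auto
      also have "\<dots> = e * \<bar>t\<bar> ^ Suc n" by simp
      finally show "\<bar>u t - c * t ^ Suc n / fact (Suc n)\<bar> \<le> e * \<bar>t\<bar> ^ Suc n" by (simp add: \<psi>_def)
    qed
  qed
qed

lemma jet_small:
  assumes "smooth1 J u" "ball 0 r \<subseteq> J" "r > 0" "\<forall>j\<le>n. (deriv ^^ j) u 0 = 0"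
  shows "small n u"
  using taylor_small[OF assms(1-3), of n] assms(4) by simp

lemma small_jet:
  assumes "smooth1 J u" "ball 0 r \<subseteq> J" "r > 0" "small n u" "j \<le> n"
  shows "(deriv ^^ j) u 0 = 0"
proof (rule ccontr)
  assume "(deriv ^^ j) u 0 \<noteq> 0"
  define j0 where "j0 = (LEAST i. i \<le> n \<and> (deriv ^^ i) u 0 \<noteq> 0)"
  have j0: "j0 \<le> n" "(deriv ^^ j0) u 0 \<noteq> 0"
    using LeastI[of "\<lambda>i. i \<le> n \<and> (deriv ^^ i) u 0 \<noteq> 0" j] \<open>(deriv ^^ j) u 0 \<noteq> 0\<close> assms(5)
    unfolding j0_def by auto
  have below: "\<forall>i<j0. (deriv ^^ i) u 0 = 0"
  proof (intro allI impI)
    fix i assume "i < j0"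
    then show "(deriv ^^ i) u 0 = 0"
      using not_less_Least[of i "\<lambda>i. i \<le> n \<and> (deriv ^^ i) u 0 \<noteq> 0"] j0(1) unfolding j0_def by auto
  qed
  define c where "c = (deriv ^^ j0) u 0"
  have "small j0 (\<lambda>t. u t - c * t ^ j0 / fact j0)"
    using taylor_small[OF assms(1-3) below] by (simp add: c_def)
  moreover have "small j0 u" using assms(4) j0(1) by (rule small_mono)
  ultimately have "small j0 (\<lambda>t. u t - (u t - c * t ^ j0 / fact j0))" by (rule small_diff[rotated])
  then have S: "small j0 (\<lambda>t. c * t ^ j0 / fact j0)" by simp
  have cp: "\<bar>c\<bar> / fact j0 > 0" using j0(2) by (simp add: c_def)
  obtain d where d: "d > 0" "\<And>t. \<bar>t\<bar> < d \<Longrightarrow> \<bar>c * t ^ j0 / fact j0\<bar> \<le> (\<bar>c\<bar> / fact j0 / 2) * \<bar>t\<bar> ^ j0"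
    using smallD[OF S, of "\<bar>c\<bar> / fact j0 / 2"] cp by auto
  define t where "t = d / 2"
  have tp: "\<bar>t\<bar> ^ j0 > 0" using d by (simp add: t_def)
  have "\<bar>c * t ^ j0 / fact j0\<bar> = (\<bar>c\<bar> / fact j0) * \<bar>t\<bar> ^ j0" by (simp add: abs_mult power_abs)
  moreover have "\<bar>c * t ^ j0 / fact j0\<bar> \<le> (\<bar>c\<bar> / fact j0 / 2) * \<bar>t\<bar> ^ j0" using d by (intro d(2)) (simp add: t_def)
  ultimately have "(\<bar>c\<bar> / fact j0) * \<bar>t\<bar> ^ j0 \<le> (\<bar>c\<bar> / fact j0 / 2) * \<bar>t\<bar> ^ j0" by simp
  then have "\<bar>c\<bar> / fact j0 \<le> \<bar>c\<bar> / fact j0 / 2" by (simp only: mult_le_cancel_right_pos[OF tp])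
  then show False using cp by simp
qed

lemma deriv_funpow_zero: "(deriv ^^ m) (\<lambda>_. 0::real) = (\<lambda>_. 0)"
proof (induction m)
  case 0 then show ?case by simp
next
  case (Suc m)
  have "deriv (\<lambda>_. 0::real) = (\<lambda>_. 0)" by (rule ext) (rule DERIV_imp_deriv, rule DERIV_const)
  then show ?case using Suc by simp
qed

lemma deriv_funpow_const: "(deriv ^^ Suc m) (\<lambda>_. c::real) = (\<lambda>_. 0)"
proof -
  have "deriv (\<lambda>_. c::real) = (\<lambda>_. 0)" by (rule ext) (rule DERIV_imp_deriv, rule DERIV_const)
  then show ?thesis by (simp add: deriv_funpow_Suc' deriv_funpow_zero del: funpow.simps)
qed

lemma smooth1_diff_eq:
  assumes "smooth1 J u" "smooth1 J v"
  shows "\<forall>s\<in>J. (deriv ^^ m) (\<lambda>t. u t - v t) s = (deriv ^^ m) u s - (deriv ^^ m) v s"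
proof (induction m)
  case 0 then show ?case by simp
next
  case (Suc m)
  have oJ: "open J" using assms(1) by (simp add: smooth1_def)
  show ?case
  proof
    fix s assume s: "s \<in> J"
    have "eventually (\<lambda>x. (deriv ^^ m) (\<lambda>t. u t - v t) x = (deriv ^^ m) u x - (deriv ^^ m) v x) (nhds s)"
      unfolding eventually_nhds using oJ Suc s by blast
    then have "deriv ((deriv ^^ m) (\<lambda>t. u t - v t)) s = deriv (\<lambda>x. (deriv ^^ m) u x - (deriv ^^ m) v x) s"
      by (rule deriv_cong_ev) simp
    also have "\<dots> = (deriv ^^ Suc m) u s - (deriv ^^ Suc m) v s"
      by (rule DERIV_imp_deriv, rule DERIV_diff) (use smooth1_Dm[OF assms(1) s] smooth1_Dm[OF assms(2) s] in auto)
    finally show "(deriv ^^ Suc m) (\<lambda>t. u t - v t) s = (deriv ^^ Suc m) u s - (deriv ^^ Suc m) v s" by simp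
  qed
qed

lemma smooth1_diff:
  assumes "smooth1 J u" "smooth1 J v"
  shows "smooth1 J (\<lambda>t. u t - v t)"
  unfolding smooth1_def
proof (intro conjI allI ballI)
  show oJ: "open J" using assms(1) by (simp add: smooth1_def)
  fix m s assume s: "s \<in> J"
  have "((\<lambda>x. (deriv ^^ m) u x - (deriv ^^ m) v x) has_real_derivative
          (deriv ^^ Suc m) u s - (deriv ^^ Suc m) v s) (at s)"
    by (rule DERIV_diff) (use smooth1_Dm[OF assms(1) s] smooth1_Dm[OF assms(2) s] in auto)
  then have "((\<lambda>x. (deriv ^^ m) u x - (deriv ^^ m) v x) has_real_derivative
          (deriv ^^ Suc m) (\<lambda>t. u t - v t) s) (at s)"
    using smooth1_diff_eq[OF assms, of "Suc m"] s by simp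
  then show "((deriv ^^ m) (\<lambda>t. u t - v t) has_real_derivative (deriv ^^ Suc m) (\<lambda>t. u t - v t) s) (at s)"
    by (rule has_field_derivative_transform_within_open[OF _ oJ s])
       (use smooth1_diff_eq[OF assms, of m] in simp)
qed

lemma smooth1_add_eq:
  assumes "smooth1 J u" "smooth1 J v"
  shows "\<forall>s\<in>J. (deriv ^^ m) (\<lambda>t. u t + v t) s = (deriv ^^ m) u s + (deriv ^^ m) v s"
proof (induction m)
  case 0 then show ?case by simp
next
  case (Suc m)
  have oJ: "open J" using assms(1) by (simp add: smooth1_def)
  show ?case
  proof
    fix s assume s: "s \<in> J"
    have "eventually (\<lambda>x. (deriv ^^ m) (\<lambda>t. u t + v t) x = (deriv ^^ m) u x + (deriv ^^ m) v x) (nhds s)"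
      unfolding eventually_nhds using oJ Suc s by blast
    then have "deriv ((deriv ^^ m) (\<lambda>t. u t + v t)) s = deriv (\<lambda>x. (deriv ^^ m) u x + (deriv ^^ m) v x) s"
      by (rule deriv_cong_ev) simp
    also have "\<dots> = (deriv ^^ Suc m) u s + (deriv ^^ Suc m) v s"
      by (rule DERIV_imp_deriv, rule DERIV_add) (use smooth1_Dm[OF assms(1) s] smooth1_Dm[OF assms(2) s] in auto)
    finally show "(deriv ^^ Suc m) (\<lambda>t. u t + v t) s = (deriv ^^ Suc m) u s + (deriv ^^ Suc m) v s" by simp
  qed
qed

lemma smooth1_add:
  assumes "smooth1 J u" "smooth1 J v"
  shows "smooth1 J (\<lambda>t. u t + v t)"
  unfolding smooth1_def
proof (intro conjI allI ballI)
  show oJ: "open J" using assms(1) by (simp add: smooth1_def)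
  fix m s assume s: "s \<in> J"
  have "((\<lambda>x. (deriv ^^ m) u x + (deriv ^^ m) v x) has_real_derivative
          (deriv ^^ Suc m) u s + (deriv ^^ Suc m) v s) (at s)"
    by (rule DERIV_add) (use smooth1_Dm[OF assms(1) s] smooth1_Dm[OF assms(2) s] in auto)
  then have "((\<lambda>x. (deriv ^^ m) u x + (deriv ^^ m) v x) has_real_derivative
          (deriv ^^ Suc m) (\<lambda>t. u t + v t) s) (at s)"
    using smooth1_add_eq[OF assms, of "Suc m"] s by simp
  then show "((deriv ^^ m) (\<lambda>t. u t + v t) has_real_derivative (deriv ^^ Suc m) (\<lambda>t. u t + v t) s) (at s)"
    by (rule has_field_derivative_transform_within_open[OF _ oJ s])
       (use smooth1_add_eq[OF assms, of m] in simp)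
qed

lemma Dt_iter_eq: "(Dt ^^ m) F p = (deriv ^^ m) (\<lambda>s. F (fst p, s)) (snd p)"
proof (induction m arbitrary: p)
  case 0 then show ?case by simp
next
  case (Suc m)
  have e: "(\<lambda>s. (Dt ^^ m) F (fst p, s)) = (deriv ^^ m) (\<lambda>s. F (fst p, s))"
    using Suc by (simp add: fun_eq_iff)
  have "(Dt ^^ Suc m) F p = deriv (\<lambda>s. (Dt ^^ m) F (fst p, s)) (snd p)" by (simp add: Dt_def)
  also have "\<dots> = (deriv ^^ Suc m) (\<lambda>s. F (fst p, s)) (snd p)" by (simp add: e)
  finally show ?case .
qed

lemma open_slice: "open U \<Longrightarrow> open {s. (q, s) \<in> U}"
proof -
  assume "open U"
  then have "open ((\<lambda>s. (q, s)) -` U)" by (intro open_vimage continuous_intros)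
  then show ?thesis by (simp add: vimage_def)
qed

lemma ana3_smooth1:
  assumes A: "real_analytic3_on U F"
  shows "smooth1 {s. (q, s) \<in> U} (\<lambda>s. F (q, s))"
  unfolding smooth1_def
proof (intro conjI allI ballI)
  have oU: "open U" using A by (simp add: ana3_iff)
  show "open {s. (q, s) \<in> U}" using oU by (rule open_slice)
  fix m s assume s: "s \<in> {s. (q, s) \<in> U}"
  have e: "(deriv ^^ k) (\<lambda>s. F (q, s)) = (\<lambda>s. (Dt ^^ k) F (q, s))" for k
    using Dt_iter_eq[of k F] by (simp add: fun_eq_iff)
  have "((\<lambda>s'. (Dt ^^ m) F (fst (q, s), s')) has_real_derivative Dt ((Dt ^^ m) F) (q, s)) (at (snd (q, s)))"
    by (rule ana3_Dt_has[OF ana3_Dt_iter[OF A]]) (use s in simp)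
  then show "((deriv ^^ m) (\<lambda>s. F (q, s)) has_real_derivative (deriv ^^ Suc m) (\<lambda>s. F (q, s)) s) (at s)"
    unfolding e by simp
qed

lemma Dt_local_U: "open U \<Longrightarrow> (\<And>q. q \<in> U \<Longrightarrow> F q = G q) \<Longrightarrow> p \<in> U \<Longrightarrow> Dt F p = Dt G p"
proof -
  assume oU: "open U" and eq: "\<And>q. q \<in> U \<Longrightarrow> F q = G q" and p: "p \<in> U"
  have o: "open {s. (fst p, s) \<in> U}" using oU by (rule open_slice)
  have "eventually (\<lambda>s. F (fst p, s) = G (fst p, s)) (nhds (snd p))"
    unfolding eventually_nhds using o p eq by (intro exI[of _ "{s. (fst p, s) \<in> U}"]) auto
  then show ?thesis unfolding Dt_def by (rule deriv_cong_ev) simp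
qed

lemma open_slice_x: "open U \<Longrightarrow> open {r. ((r, y), t) \<in> U}"
proof -
  assume "open U"
  then have "open ((\<lambda>r. ((r, y), t)) -` U)" by (intro open_vimage continuous_intros)
  then show ?thesis by (simp add: vimage_def)
qed

lemma open_slice_y: "open U \<Longrightarrow> open {r. ((x, r), t) \<in> U}"
proof -
  assume "open U"
  then have "open ((\<lambda>r. ((x, r), t)) -` U)" by (intro open_vimage continuous_intros)
  then show ?thesis by (simp add: vimage_def)
qed

lemma Dx_local_U: "open U \<Longrightarrow> (\<And>q. q \<in> U \<Longrightarrow> F q = G q) \<Longrightarrow> p \<in> U \<Longrightarrow> Dx F p = Dx G p"
proof -
  assume oU: "open U" and eq: "\<And>q. q \<in> U \<Longrightarrow> F q = G q" and p: "p \<in> U"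
  have o: "open {r. ((r, snd (fst p)), snd p) \<in> U}" using oU by (rule open_slice_x)
  have "eventually (\<lambda>r. F ((r, snd (fst p)), snd p) = G ((r, snd (fst p)), snd p)) (nhds (fst (fst p)))"
    unfolding eventually_nhds using o p eq by (intro exI[of _ "{r. ((r, snd (fst p)), snd p) \<in> U}"]) auto
  then show ?thesis unfolding Dx_def by (rule deriv_cong_ev) simp
qed

lemma Dy_local_U: "open U \<Longrightarrow> (\<And>q. q \<in> U \<Longrightarrow> F q = G q) \<Longrightarrow> p \<in> U \<Longrightarrow> Dy F p = Dy G p"
proof -
  assume oU: "open U" and eq: "\<And>q. q \<in> U \<Longrightarrow> F q = G q" and p: "p \<in> U"
  have o: "open {r. ((fst (fst p), r), snd p) \<in> U}" using oU by (rule open_slice_y)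
  have "eventually (\<lambda>r. F ((fst (fst p), r), snd p) = G ((fst (fst p), r), snd p)) (nhds (snd (fst p)))"
    unfolding eventually_nhds using o p eq by (intro exI[of _ "{r. ((fst (fst p), r), snd p) \<in> U}"]) auto
  then show ?thesis unfolding Dy_def by (rule deriv_cong_ev) simp
qed

lemma Dx_local_V:
  assumes "open V" "\<And>q. q \<in> V \<Longrightarrow> F (q, t) = G (q, t)" "q \<in> V"
  shows "Dx F (q, t) = Dx G (q, t)"
proof -
  have o: "open {r. (r, snd q) \<in> V}"
  proof -
    have "open ((\<lambda>r. (r, snd q)) -` V)" using assms(1) by (intro open_vimage continuous_intros)
    then show ?thesis by (simp add: vimage_def)
  qed
  have "eventually (\<lambda>r. F ((r, snd q), t) = G ((r, snd q), t)) (nhds (fst q))"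
    unfolding eventually_nhds using o assms(2,3) by (intro exI[of _ "{r. (r, snd q) \<in> V}"]) auto
  then show ?thesis unfolding Dx_def by (simp add: deriv_cong_ev)
qed

lemma Dy_local_V:
  assumes "open V" "\<And>q. q \<in> V \<Longrightarrow> F (q, t) = G (q, t)" "q \<in> V"
  shows "Dy F (q, t) = Dy G (q, t)"
proof -
  have o: "open {r. (fst q, r) \<in> V}"
  proof -
    have "open ((\<lambda>r. (fst q, r)) -` V)" using assms(1) by (intro open_vimage continuous_intros)
    then show ?thesis by (simp add: vimage_def)
  qed
  have "eventually (\<lambda>r. F ((fst q, r), t) = G ((fst q, r), t)) (nhds (snd q))"
    unfolding eventually_nhds using o assms(2,3) by (intro exI[of _ "{r. (fst q, r) \<in> V}"]) auto
  then show ?thesis unfolding Dy_def by (simp add: deriv_cong_ev)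
qed

lemma comm_gen:
  assumes oU: "open U"
    and cl: "\<And>H. real_analytic3_on U H \<Longrightarrow> real_analytic3_on U (Op H)"
    and cm: "\<And>H p. real_analytic3_on U H \<Longrightarrow> p \<in> U \<Longrightarrow> Dt (Op H) p = Op (Dt H) p"
    and loc: "\<And>H G p. (\<And>q. q \<in> U \<Longrightarrow> H q = G q) \<Longrightarrow> p \<in> U \<Longrightarrow> Op H p = Op G p"
    and A: "real_analytic3_on U F"
  shows "p \<in> U \<Longrightarrow> (Dt ^^ j) (Op F) p = Op ((Dt ^^ j) F) p"
proof (induction j arbitrary: p)
  case 0 then show ?case by simp
next
  case (Suc j)
  have "(Dt ^^ Suc j) (Op F) p = Dt ((Dt ^^ j) (Op F)) p" by simp
  also have "\<dots> = Dt (Op ((Dt ^^ j) F)) p" by (rule Dt_local_U[OF oU Suc.IH Suc.prems])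
  also have "\<dots> = Op (Dt ((Dt ^^ j) F)) p" by (rule cm[OF ana3_Dt_iter[OF A] Suc.prems])
  also have "\<dots> = Op ((Dt ^^ Suc j) F) p" by simp
  finally show ?case .
qed

lemma comm_Dx: "real_analytic3_on U H \<Longrightarrow> p \<in> U \<Longrightarrow> Dt (Dx H) p = Dx (Dt H) p"
  using ana3_Dx_Dt by metis
lemma comm_Dy: "real_analytic3_on U H \<Longrightarrow> p \<in> U \<Longrightarrow> Dt (Dy H) p = Dy (Dt H) p"
  using ana3_Dy_Dt by metis

lemma comm_DxDx: "real_analytic3_on U H \<Longrightarrow> p \<in> U \<Longrightarrow> Dt (Dx (Dx H)) p = Dx (Dx (Dt H)) p"
proof -
  assume A: "real_analytic3_on U H" and p: "p \<in> U"
  have oU: "open U" using A by (simp add: ana3_iff)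
  have "Dt (Dx (Dx H)) p = Dx (Dt (Dx H)) p" by (rule comm_Dx[OF ana3_Dx[OF A] p])
  also have "\<dots> = Dx (Dx (Dt H)) p" by (rule Dx_local_U[OF oU comm_Dx[OF A] p])
  finally show ?thesis .
qed

lemma comm_DyDy: "real_analytic3_on U H \<Longrightarrow> p \<in> U \<Longrightarrow> Dt (Dy (Dy H)) p = Dy (Dy (Dt H)) p"
proof -
  assume A: "real_analytic3_on U H" and p: "p \<in> U"
  have oU: "open U" using A by (simp add: ana3_iff)
  have "Dt (Dy (Dy H)) p = Dy (Dt (Dy H)) p" by (rule comm_Dy[OF ana3_Dy[OF A] p])
  also have "\<dots> = Dy (Dy (Dt H)) p" by (rule Dy_local_U[OF oU comm_Dy[OF A] p])
  finally show ?thesis .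
qed

lemma comm_DyDx: "real_analytic3_on U H \<Longrightarrow> p \<in> U \<Longrightarrow> Dt (Dy (Dx H)) p = Dy (Dx (Dt H)) p"
proof -
  assume A: "real_analytic3_on U H" and p: "p \<in> U"
  have oU: "open U" using A by (simp add: ana3_iff)
  have "Dt (Dy (Dx H)) p = Dy (Dt (Dx H)) p" by (rule comm_Dy[OF ana3_Dx[OF A] p])
  also have "\<dots> = Dy (Dx (Dt H)) p" by (rule Dy_local_U[OF oU comm_Dx[OF A] p])
  finally show ?thesis .
qed

lemma comm_iter_DxDx:
  assumes A: "real_analytic3_on U F" and p: "p \<in> U"
  shows "(Dt ^^ j) (Dx (Dx F)) p = Dx (Dx ((Dt ^^ j) F)) p"
proof -
  have oU: "open U" using A by (simp add: ana3_iff)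
  show ?thesis
  proof (rule comm_gen[of U "\<lambda>H. Dx (Dx H)", OF oU _ _ _ A p])
    show "\<And>H. real_analytic3_on U H \<Longrightarrow> real_analytic3_on U (Dx (Dx H))"
      by (intro ana3_Dx ana3_Dx)
    show "\<And>H p. real_analytic3_on U H \<Longrightarrow> p \<in> U \<Longrightarrow> Dt (Dx (Dx H)) p = Dx (Dx (Dt H)) p"
      by (rule comm_DxDx)
    fix H G :: "pt \<Rightarrow> real" and q assume eq: "\<And>q. q \<in> U \<Longrightarrow> H q = G q" and q: "q \<in> U"
    have "\<And>q. q \<in> U \<Longrightarrow> Dx H q = Dx G q" by (rule Dx_local_U[OF oU eq])
    then show "Dx (Dx H) q = Dx (Dx G) q" by (rule Dx_local_U[OF oU _ q])
  qed
qed

lemma comm_iter_DyDy: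
  assumes A: "real_analytic3_on U F" and p: "p \<in> U"
  shows "(Dt ^^ j) (Dy (Dy F)) p = Dy (Dy ((Dt ^^ j) F)) p"
proof -
  have oU: "open U" using A by (simp add: ana3_iff)
  show ?thesis
  proof (rule comm_gen[of U "\<lambda>H. Dy (Dy H)", OF oU _ _ _ A p])
    show "\<And>H. real_analytic3_on U H \<Longrightarrow> real_analytic3_on U (Dy (Dy H))"
      by (intro ana3_Dy ana3_Dy)
    show "\<And>H p. real_analytic3_on U H \<Longrightarrow> p \<in> U \<Longrightarrow> Dt (Dy (Dy H)) p = Dy (Dy (Dt H)) p"
      by (rule comm_DyDy)
    fix H G :: "pt \<Rightarrow> real" and q assume eq: "\<And>q. q \<in> U \<Longrightarrow> H q = G q" and q: "q \<in> U"
    have "\<And>q. q \<in> U \<Longrightarrow> Dy H q = Dy G q" by (rule Dy_local_U[OF oU eq])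
    then show "Dy (Dy H) q = Dy (Dy G) q" by (rule Dy_local_U[OF oU _ q])
  qed
qed

lemma comm_iter_DyDx:
  assumes A: "real_analytic3_on U F" and p: "p \<in> U"
  shows "(Dt ^^ j) (Dy (Dx F)) p = Dy (Dx ((Dt ^^ j) F)) p"
proof -
  have oU: "open U" using A by (simp add: ana3_iff)
  show ?thesis
  proof (rule comm_gen[of U "\<lambda>H. Dy (Dx H)", OF oU _ _ _ A p])
    show "\<And>H. real_analytic3_on U H \<Longrightarrow> real_analytic3_on U (Dy (Dx H))"
      by (intro ana3_Dy ana3_Dx)
    show "\<And>H p. real_analytic3_on U H \<Longrightarrow> p \<in> U \<Longrightarrow> Dt (Dy (Dx H)) p = Dy (Dx (Dt H)) p"
      by (rule comm_DyDx)
    fix H G :: "pt \<Rightarrow> real" and q assume eq: "\<And>q. q \<in> U \<Longrightarrow> H q = G q" and q: "q \<in> U"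
    have "\<And>q. q \<in> U \<Longrightarrow> Dx H q = Dx G q" by (rule Dx_local_U[OF oU eq])
    then show "Dy (Dx H) q = Dy (Dx G) q" by (rule Dy_local_U[OF oU _ q])
  qed
qed

lemma second_deriv_max:
  fixes \<phi> \<phi>1 :: "real \<Rightarrow> real"
  assumes d: "d > 0"
    and D1: "\<And>x. \<bar>x - x0\<bar> < d \<Longrightarrow> (\<phi> has_real_derivative \<phi>1 x) (at x)"
    and D2: "(\<phi>1 has_real_derivative A) (at x0)"
    and mx: "\<And>x. \<bar>x - x0\<bar> < d \<Longrightarrow> \<phi> x \<le> \<phi> x0"
  shows "A \<le> 0"
proof (rule ccontr)
  assume "\<not> A \<le> 0"
  then have A: "A > 0" by simp
  have "\<phi>1 x0 = 0"
    by (rule DERIV_local_max[OF D1[of x0] d]) (use d mx in \<open>auto simp: abs_minus_commute\<close>)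
  obtain e where e: "e > 0" "\<And>h. h > 0 \<Longrightarrow> h < e \<Longrightarrow> \<phi>1 x0 < \<phi>1 (x0 + h)"
    using DERIV_pos_inc_right[OF D2 A] by blast
  define h where "h = min e d / 2"
  have h: "h > 0" "h < e" "h < d" using e d by (auto simp: h_def)
  obtain z where z: "x0 < z" "z < x0 + h" "\<phi> (x0 + h) - \<phi> x0 = (x0 + h - x0) * \<phi>1 z"
    using MVT2[of x0 "x0 + h" \<phi> \<phi>1] h D1 by force
  have "\<phi>1 z > 0" using e(2)[of "z - x0"] z h \<open>\<phi>1 x0 = 0\<close> by simp
  then have "h * \<phi>1 z > 0" using h by simp
  then have "\<phi> (x0 + h) > \<phi> x0" using z(3) by simp
  moreover have "\<phi> (x0 + h) \<le> \<phi> x0" using mx[of "x0 + h"] h by simp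
  ultimately show False by simp
qed

lemma max_principle:
  fixes \<Omega> :: "(real \<times> real) set" and w :: "real \<times> real \<Rightarrow> real"
  assumes oO: "open \<Omega>" and bO: "bounded \<Omega>" and cw: "continuous_on (closure \<Omega>) w"
    and fr: "\<And>p. p \<in> frontier \<Omega> \<Longrightarrow> w p \<le> 0"
    and lap: "\<And>p. p \<in> \<Omega> \<Longrightarrow> \<exists>wx wy A B.
        (\<forall>x. (x, snd p) \<in> \<Omega> \<longrightarrow> ((\<lambda>r. w (r, snd p)) has_real_derivative wx x) (at x)) \<and>
        (wx has_real_derivative A) (at (fst p)) \<and>
        (\<forall>y. (fst p, y) \<in> \<Omega> \<longrightarrow> ((\<lambda>r. w (fst p, r)) has_real_derivative wy y) (at y)) \<and>
        (wy has_real_derivative B) (at (snd p)) \<and> A + B = 0"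
    and p0: "p0 \<in> closure \<Omega>"
  shows "w p0 \<le> 0"
proof (rule ccontr)
  assume "\<not> w p0 \<le> 0"
  then have wp0: "w p0 > 0" by simp
  have "bounded (closure \<Omega>)" using bO by (rule bounded_closure)
  then obtain R where R: "\<And>p. p \<in> closure \<Omega> \<Longrightarrow> norm p \<le> R" unfolding bounded_iff by blast
  define \<delta> where "\<delta> = w p0 / (2 * (R\<^sup>2 + 1))"
  have "R\<^sup>2 + 1 > 0" by (simp add: add_nonneg_pos)
  then have \<delta>: "\<delta> > 0" using wp0 unfolding \<delta>_def by (intro divide_pos_pos) auto
  define v where "v = (\<lambda>p. w p + \<delta> * ((fst p)\<^sup>2 + (snd p)\<^sup>2))"
  have cv: "continuous_on (closure \<Omega>) v" unfolding v_def by (intro continuous_intros cw)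
  obtain q where q: "q \<in> closure \<Omega>" "\<And>y. y \<in> closure \<Omega> \<Longrightarrow> v y \<le> v q"
  proof -
    have "closure \<Omega> \<noteq> {}" using p0 by auto
    then have "\<exists>x\<in>closure \<Omega>. \<forall>y\<in>closure \<Omega>. v y \<le> v x"
      using continuous_attains_sup[of "closure \<Omega>" v] cv bO by auto
    then show ?thesis using that by blast
  qed
  have nq: "(fst p)\<^sup>2 + (snd p)\<^sup>2 = (norm p)\<^sup>2" for p :: "real \<times> real"
    by (cases p) (simp add: norm_Pair)
  have vq: "v q \<ge> w p0" using q(2)[OF p0] \<delta> unfolding v_def by (smt (verit) mult_nonneg_nonneg zero_le_power2)
  have qO: "q \<in> \<Omega>"
  proof (rule ccontr)
    assume "q \<notin> \<Omega>"
    then have "q \<in> frontier \<Omega>" using q(1) oO by (simp add: frontier_def interior_open)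
    then have wq: "w q \<le> 0" by (rule fr)
    have "(norm q)\<^sup>2 \<le> R\<^sup>2" using R[OF q(1)] by (simp add: power_mono)
    then have "\<delta> * ((fst q)\<^sup>2 + (snd q)\<^sup>2) \<le> \<delta> * R\<^sup>2" using \<delta> by (simp add: nq)
    also have "\<delta> * R\<^sup>2 < w p0"
    proof -
      have "\<delta> * R\<^sup>2 = w p0 * (R\<^sup>2 / (2 * (R\<^sup>2 + 1)))" by (simp add: \<delta>_def)
      also have "R\<^sup>2 / (2 * (R\<^sup>2 + 1)) < 1"
      proof -
        have pos: "2 * (R\<^sup>2 + 1) > 0" by (simp add: add_nonneg_pos)
        have "R\<^sup>2 < 2 * (R\<^sup>2 + 1)" by (simp add: add_nonneg_pos)
        then show ?thesis using pos by (simp add: divide_less_eq)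
      qed
      then have "w p0 * (R\<^sup>2 / (2 * (R\<^sup>2 + 1))) < w p0 * 1" using wp0 by (intro mult_strict_left_mono)
      finally show ?thesis by simp
    qed
    finally show False using wq vq unfolding v_def by simp
  qed
  obtain wx wy A B where W:
    "\<forall>x. (x, snd q) \<in> \<Omega> \<longrightarrow> ((\<lambda>r. w (r, snd q)) has_real_derivative wx x) (at x)"
    "(wx has_real_derivative A) (at (fst q))"
    "\<forall>y. (fst q, y) \<in> \<Omega> \<longrightarrow> ((\<lambda>r. w (fst q, r)) has_real_derivative wy y) (at y)"
    "(wy has_real_derivative B) (at (snd q))" "A + B = 0"
    using lap[OF qO] by blast
  obtain e where e: "e > 0" "ball q e \<subseteq> \<Omega>" using oO qO open_contains_ball by blast
  have inx: "(x, snd q) \<in> \<Omega>" if "\<bar>x - fst q\<bar> < e" for x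
  proof -
    have "dist q (x, snd q) = \<bar>x - fst q\<bar>"
      by (cases q) (simp add: dist_Pair_Pair dist_real_def abs_minus_commute)
    then show ?thesis using e that by auto
  qed
  have iny: "(fst q, y) \<in> \<Omega>" if "\<bar>y - snd q\<bar> < e" for y
  proof -
    have "dist q (fst q, y) = \<bar>y - snd q\<bar>"
      by (cases q) (simp add: dist_Pair_Pair dist_real_def abs_minus_commute)
    then show ?thesis using e that by auto
  qed
  have "A + 2 * \<delta> * fst q \<le> 0 \<or> True" by simp
  have Ax: "A + \<delta> * 2 \<le> 0"
  proof (rule second_deriv_max[OF e(1)])
    fix x assume "\<bar>x - fst q\<bar> < e"
    then have "(x, snd q) \<in> \<Omega>" by (rule inx)
    then show "((\<lambda>r. v (r, snd q)) has_real_derivative wx x + \<delta> * (2 * x)) (at x)"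
      unfolding v_def using W(1) by (auto intro!: derivative_eq_intros)
  next
    show "((\<lambda>x. wx x + \<delta> * (2 * x)) has_real_derivative A + \<delta> * 2) (at (fst q))"
      using W(2) by (auto intro!: derivative_eq_intros)
  next
    fix x assume "\<bar>x - fst q\<bar> < e"
    then have "(x, snd q) \<in> closure \<Omega>" using inx closure_subset by blast
    then show "v (x, snd q) \<le> v (fst q, snd q)" using q(2) by simp
  qed
  have By: "B + \<delta> * 2 \<le> 0"
  proof (rule second_deriv_max[OF e(1)])
    fix y assume "\<bar>y - snd q\<bar> < e"
    then have "(fst q, y) \<in> \<Omega>" by (rule iny)
    then show "((\<lambda>r. v (fst q, r)) has_real_derivative wy y + \<delta> * (2 * y)) (at y)"
      unfolding v_def using W(3) by (auto intro!: derivative_eq_intros)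
  next
    show "((\<lambda>y. wy y + \<delta> * (2 * y)) has_real_derivative B + \<delta> * 2) (at (snd q))"
      using W(4) by (auto intro!: derivative_eq_intros)
  next
    fix y assume "\<bar>y - snd q\<bar> < e"
    then have "(fst q, y) \<in> closure \<Omega>" using iny closure_subset by blast
    then show "v (fst q, y) \<le> v (fst q, snd q)" using q(2) by simp
  qed
  show False using Ax By W(5) \<delta> by simp
qed

lemma periodic_nat:
  assumes "\<forall>t. \<gamma> (t + P) = \<gamma> t"
  shows "\<gamma> (t + real n * P) = \<gamma> t"
proof (induction n)
  case 0 then show ?case by simp
next
  case (Suc n)
  have "\<gamma> (t + real (Suc n) * P) = \<gamma> ((t + real n * P) + P)" by (simp add: algebra_simps)
  also have "\<dots> = \<gamma> (t + real n * P)" using assms by (rule spec)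
  finally show ?case using Suc by simp
qed

lemma periodic_int:
  assumes "\<forall>t. \<gamma> (t + P) = \<gamma> t"
  shows "\<gamma> (t + real_of_int n * P) = \<gamma> t"
proof (cases "n \<ge> 0")
  case True
  then obtain m where "n = int m" by (metis nonneg_eq_int)
  then show ?thesis using periodic_nat[OF assms, of t m] by simp
next
  case False
  then obtain m where m: "n = - int m" using neg_int_cases[of n] False by (metis int_zle_neg le_less not_le)
  have "\<gamma> ((t - real m * P) + real m * P) = \<gamma> (t - real m * P)" by (rule periodic_nat[OF assms])
  then show ?thesis using m by simp
qed

lemma jordan_open_bounded:
  assumes "jordan_domain_analytic \<Omega>"
  shows "open \<Omega> \<and> bounded \<Omega>"
proof -
  obtain \<gamma> :: "real \<Rightarrow> real \<times> real" and P where H: "P > 0 \<and> ((\<forall>t. \<gamma> (t + P) = \<gamma> t) \<and> inj_on \<gamma> {0..<P} \<and>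
        real_analytic1_on UNIV (\<lambda>t. fst (\<gamma> t)) \<and>
        real_analytic1_on UNIV (\<lambda>t. snd (\<gamma> t)) \<and>
        (\<forall>t. \<exists>v. (\<gamma> has_vector_derivative v) (at t) \<and> v \<noteq> 0) \<and>
        \<Omega> = inside (range \<gamma>))"
    using assms unfolding jordan_domain_analytic_def by (elim exE) (rule that)
  have P: "P > 0" "\<forall>t. \<gamma> (t + P) = \<gamma> t" using H by simp_all
  have O: "\<Omega> = inside (range \<gamma>)" using H by simp
  have d: "\<forall>t. \<exists>v. (\<gamma> has_vector_derivative v) (at t)" using H by (meson conjE)
  have cont: "continuous_on UNIV \<gamma>"
  proof (rule continuous_at_imp_continuous_on, rule ballI)
    fix t :: real
    obtain v where "(\<gamma> has_vector_derivative v) (at t)" using d by blast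
    then show "isCont \<gamma> t"
      unfolding has_vector_derivative_def by (rule has_derivative_continuous)
  qed
  have rg: "range \<gamma> = \<gamma> ` {0..P}"
  proof
    show "\<gamma> ` {0..P} \<subseteq> range \<gamma>" by auto
    show "range \<gamma> \<subseteq> \<gamma> ` {0..P}"
    proof
      fix z assume "z \<in> range \<gamma>"
      then obtain t where z: "z = \<gamma> t" by blast
      define n where "n = \<lfloor>t / P\<rfloor>"
      define t' where "t' = t - real_of_int n * P"
      have "real_of_int n \<le> t / P" "t / P < real_of_int n + 1" unfolding n_def by linarith+
      then have "real_of_int n * P \<le> t" "t < (real_of_int n + 1) * P"
        using P(1) by (simp_all add: field_simps)
      then have t': "0 \<le> t'" "t' \<le> P" unfolding t'_def by (auto simp: algebra_simps)
      have "\<gamma> t = \<gamma> (t' + real_of_int n * P)" by (simp add: t'_def)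
      also have "\<dots> = \<gamma> t'" by (rule periodic_int[OF P(2)])
      finally show "z \<in> \<gamma> ` {0..P}" using z t' by auto
    qed
  qed
  have "compact (\<gamma> ` {0..P})"
    by (rule compact_continuous_image) (use cont continuous_on_subset in auto)
  then have c: "compact (range \<gamma>)" using rg by simp
  have "open \<Omega>" unfolding O by (rule open_inside) (use c compact_imp_closed in auto)
  moreover have "bounded \<Omega>" unfolding O by (rule bounded_inside) (use c compact_imp_bounded in auto)
  ultimately show ?thesis by blast
qed

lemma ser3_mono: "ser3 c a r F \<Longrightarrow> r' \<le> r \<Longrightarrow> ser3 c a r' F"
  unfolding ser3_def by auto

lemma ana3_unfold:
  assumes "real_analytic3_on U F" "a \<in> U"
  obtains r c where "r > 0" "ball a r \<subseteq> U" "ser3 c a r F"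
proof -
  have "\<forall>a\<in>U. \<exists>r>0. \<exists>c. ball a r \<subseteq> U \<and> ser3 c a r F" using assms(1) unfolding ana3_iff by (rule conjunct2)
  then have "\<exists>r>0. \<exists>c. ball a r \<subseteq> U \<and> ser3 c a r F" using assms(2) by (rule bspec)
  then obtain r c where "r > 0" "ball a r \<subseteq> U" "ser3 c a r F" by blast
  then show ?thesis using that by blast
qed

lemma ana3_mono:
  assumes A: "real_analytic3_on U F" and V: "open V" "V \<subseteq> U"
  shows "real_analytic3_on V F"
  unfolding ana3_iff
proof (intro conjI ballI)
  show "open V" by fact
  fix a assume a: "a \<in> V"
  obtain r c where rc: "r > 0" "ball a r \<subseteq> U" "ser3 c a r F" using ana3_unfold[OF A] a V(2) by blast
  obtain r' where r': "r' > 0" "ball a r' \<subseteq> V" using V(1) a open_contains_ball by blast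
  have "ball a (min r r') \<subseteq> V" using r' by auto
  moreover have "ser3 c a (min r r') F" using rc(3) by (rule ser3_mono) simp
  ultimately show "\<exists>r>0. \<exists>c. ball a r \<subseteq> V \<and> ser3 c a r F" using rc(1) r'(1)
    by (intro exI[of _ "min r r'"]) auto
qed

lemma bounded_near:
  assumes "isCont u (0::real)"
  shows "\<exists>B d. d > 0 \<and> (\<forall>t. \<bar>t\<bar> < d \<longrightarrow> \<bar>u t\<bar> \<le> (B::real))"
proof -
  obtain d where d: "d > 0" "\<And>t. dist t 0 < d \<Longrightarrow> dist (u t) (u 0) < 1"
    using assms[unfolded continuous_at_eps_delta, rule_format, of 1] by auto
  have "\<forall>t. \<bar>t\<bar> < d \<longrightarrow> \<bar>u t\<bar> \<le> \<bar>u 0\<bar> + 1"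
    using d by (auto simp: dist_real_def) (smt (verit) d(2) dist_real_def)
  then show ?thesis using d(1) by blast
qed

lemma near_pos:
  fixes u :: "real \<Rightarrow> real"
  assumes "isCont u (0::real)" "u 0 > 0"
  shows "\<exists>d>0. \<forall>t. \<bar>t\<bar> < d \<longrightarrow> u t \<ge> u 0 / 2"
proof -
  obtain d where d: "d > 0" "\<And>t. dist t 0 < d \<Longrightarrow> dist (u t) (u 0) < u 0 / 2"
    using assms(1)[unfolded continuous_at_eps_delta, rule_format, of "u 0 / 2"] assms(2) by auto
  have "\<forall>t. \<bar>t\<bar> < d \<longrightarrow> u t \<ge> u 0 / 2"
  proof (intro allI impI)
    fix t :: real assume "\<bar>t\<bar> < d"
    then have "\<bar>u t - u 0\<bar> < u 0 / 2" using d(2)[of t] by (simp add: dist_real_def)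
    then show "u t \<ge> u 0 / 2" by linarith
  qed
  then show ?thesis using d(1) by blast
qed

lemma identity_t:
  assumes AF: "real_analytic3_on U F" and AG: "real_analytic3_on U G"
    and sub: "\<And>t. t \<in> {-\<epsilon>..\<epsilon>} \<Longrightarrow> (p, t) \<in> U" and e: "\<epsilon> \<ge> 0"
    and eq0: "\<And>k. (Dt ^^ k) F (p, 0) = (Dt ^^ k) G (p, 0)"
    and t: "t \<in> {-\<epsilon>..\<epsilon>}"
  shows "F (p, t) = G (p, t)"
proof -
  have oU: "open U" using AF by (simp add: ana3_iff)
  define Sl where "Sl = {s. (p, s) \<in> U}"
  have oSl: "open Sl" unfolding Sl_def using oU by (rule open_slice)
  define J where "J = connected_component_set Sl 0"
  have oJ: "open J" unfolding J_def using oSl by (rule open_connected_component)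
  have cJ: "connected J" unfolding J_def by simp
  have JSl: "J \<subseteq> Sl" unfolding J_def by (rule connected_component_subset)
  have IJ: "{-\<epsilon>..\<epsilon>} \<subseteq> J" unfolding J_def
    by (rule connected_component_maximal) (use e sub in \<open>auto simp: Sl_def\<close>)
  define S where "S = {s \<in> J. \<forall>k. (Dt ^^ k) F (p, s) = (Dt ^^ k) G (p, s)}"
  have contk: "continuous_on J (\<lambda>s. (Dt ^^ k) F (p, s) - (Dt ^^ k) G (p, s))" for k
  proof (rule continuous_at_imp_continuous_on, rule ballI)
    fix s assume s: "s \<in> J"
    then have pU: "(p, s) \<in> U" using JSl by (auto simp: Sl_def)
    have "((\<lambda>s'. (Dt ^^ k) F (fst (p, s), s')) has_real_derivative Dt ((Dt ^^ k) F) (p, s)) (at (snd (p, s)))"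
      by (rule ana3_Dt_has[OF ana3_Dt_iter[OF AF] pU])
    then have c1: "isCont (\<lambda>s'. (Dt ^^ k) F (p, s')) s" by (simp add: DERIV_isCont)
    have "((\<lambda>s'. (Dt ^^ k) G (fst (p, s), s')) has_real_derivative Dt ((Dt ^^ k) G) (p, s)) (at (snd (p, s)))"
      by (rule ana3_Dt_has[OF ana3_Dt_iter[OF AG] pU])
    then have c2: "isCont (\<lambda>s'. (Dt ^^ k) G (p, s')) s" by (simp add: DERIV_isCont)
    show "isCont (\<lambda>s. (Dt ^^ k) F (p, s) - (Dt ^^ k) G (p, s)) s" using c1 c2 by (rule isCont_diff)
  qed
  have "S = (\<Inter>k\<in>UNIV. {s \<in> J. (Dt ^^ k) F (p, s) - (Dt ^^ k) G (p, s) = 0})"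
    unfolding S_def by auto
  moreover have "closedin (top_of_set J) (\<Inter>k\<in>UNIV. {s \<in> J. (Dt ^^ k) F (p, s) - (Dt ^^ k) G (p, s) = 0})"
  proof (rule closedin_INT)
    show "(UNIV :: nat set) \<noteq> {}" by simp
    fix k :: nat
    show "closedin (top_of_set J) {s \<in> J. (Dt ^^ k) F (p, s) - (Dt ^^ k) G (p, s) = 0}"
      by (rule continuous_closedin_preimage_constant[OF contk])
  qed
  ultimately have clS: "closedin (top_of_set J) S" by simp
  have opS: "open S"
    unfolding open_contains_ball
  proof
    fix s0 assume s0: "s0 \<in> S"
    then have s0J: "s0 \<in> J" by (simp add: S_def)
    then have pU: "(p, s0) \<in> U" using JSl by (auto simp: Sl_def)
    obtain rf cf where rf: "rf > 0" "ball (p, s0) rf \<subseteq> U" "ser3 cf (p, s0) rf F" by (rule ana3_unfold[OF AF pU])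
    obtain rg cg where rg: "rg > 0" "ball (p, s0) rg \<subseteq> U" "ser3 cg (p, s0) rg G" by (rule ana3_unfold[OF AG pU])
    obtain rj where rj: "rj > 0" "ball s0 rj \<subseteq> J" using oJ s0J open_contains_ball by blast
    have coef: "cf 0 0 k = cg 0 0 k" for k
    proof -
      have "(Dt ^^ k) F (p, s0) = (dtc ^^ k) cf 0 0 0" by (rule ser3_center[OF ser3_Dt_iter[OF rf(3)] rf(1)])
      moreover have "(Dt ^^ k) G (p, s0) = (dtc ^^ k) cg 0 0 0" by (rule ser3_center[OF ser3_Dt_iter[OF rg(3)] rg(1)])
      moreover have "(Dt ^^ k) F (p, s0) = (Dt ^^ k) G (p, s0)" using s0 by (simp add: S_def)
      ultimately have "fact k * cf 0 0 k = fact k * cg 0 0 k" by (simp add: dtc_iter0)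
      then show ?thesis by simp
    qed
    define e' where "e' = min rf rg"
    have FG: "F (p, s) = G (p, s)" if "s \<in> ball s0 e'" for s
    proof (rule ser3_line_eq[OF rf(3) rg(3) coef])
      have "dist (p, s) (p, s0) = dist s s0" by (simp add: dist_Pair_Pair)
      then show "(p, s) \<in> ball (p, s0) rf" "(p, s) \<in> ball (p, s0) rg"
        using that by (auto simp: e'_def dist_commute)
    qed simp
    have "ball s0 (min e' rj) \<subseteq> S"
    proof
      fix s assume s: "s \<in> ball s0 (min e' rj)"
      then have sJ: "s \<in> J" using rj by auto
      have "(Dt ^^ k) F (p, s) = (Dt ^^ k) G (p, s)" for k
      proof -
        have "(Dt ^^ k) F (p, s) = (deriv ^^ k) (\<lambda>s. F (p, s)) s" using Dt_iter_eq[of k F "(p, s)"] by simp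
        also have "\<dots> = (deriv ^^ k) (\<lambda>s. G (p, s)) s"
          by (rule deriv_local[of "ball s0 e'"]) (use FG s in auto)
        also have "\<dots> = (Dt ^^ k) G (p, s)" using Dt_iter_eq[of k G "(p, s)"] by simp
        finally show ?thesis .
      qed
      then show "s \<in> S" using sJ by (simp add: S_def)
    qed
    moreover have "min e' rj > 0" using rf rg rj by (simp add: e'_def)
    ultimately show "\<exists>e>0. ball s0 e \<subseteq> S" by blast
  qed
  have "S \<subseteq> J" by (auto simp: S_def)
  then have opS': "openin (top_of_set J) S" using opS by (rule open_subset)
  have "0 \<in> S" using IJ e eq0 by (auto simp: S_def)
  then have "S = J" using cJ opS' clS unfolding connected_clopen by blast
  then have "t \<in> S" using IJ t by auto
  then have "(Dt ^^ 0) F (p, t) = (Dt ^^ 0) G (p, t)" unfolding S_def by blast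
  then show ?thesis by simp
qed

lemma Dt_iter_eq': "(deriv ^^ j) (\<lambda>s. H (p, s)) t = (Dt ^^ j) H (p, t)"
  using Dt_iter_eq[of j H "(p, t)"] by simp

lemma dxx_eq: "dxx (\<lambda>q. F (q, t)) p = Dx (Dx F) (p, t)" by (simp add: dxx_def Dx_def)
lemma dyy_eq: "dyy (\<lambda>q. F (q, t)) p = Dy (Dy F) (p, t)" by (simp add: dyy_def Dy_def)
lemma dxy_eq: "dxy (\<lambda>q. F (q, t)) p = Dy (Dx F) (p, t)" by (simp add: dxy_def Dx_def Dy_def)

lemma isCont_slice:
  assumes "real_analytic3_on U H" "(p, s) \<in> U"
  shows "isCont (\<lambda>s. H (p, s)) s"
proof -
  have "((\<lambda>s'. H (fst (p, s), s')) has_real_derivative Dt H (p, s)) (at (snd (p, s)))"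
    by (rule ana3_Dt_has[OF assms])
  then show ?thesis by (simp add: DERIV_isCont)
qed

lemma key_step:
  fixes F G :: "pt \<Rightarrow> real" and f0 :: "real \<times> real \<Rightarrow> real"
  assumes AF: "real_analytic3_on U F" and AG: "real_analytic3_on U G"
    and oO: "open \<Omega>" and p: "p \<in> \<Omega>" and e: "\<epsilon> > 0"
    and sub: "\<And>q t. q \<in> \<Omega> \<Longrightarrow> t \<in> {-\<epsilon>..\<epsilon>} \<Longrightarrow> (q, t) \<in> U"
    and pdeF: "\<And>t. t \<in> {-\<epsilon>..\<epsilon>} \<Longrightarrow> Dx (Dx F) (p, t) + Dy (Dy F) (p, t) =
        t * sqrt ((Dy (Dx F) (p, t))\<^sup>2 - Dx (Dx F) (p, t) * Dy (Dy F) (p, t))"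
    and pdeG: "\<And>t. t \<in> {-\<epsilon>..\<epsilon>} \<Longrightarrow> Dx (Dx G) (p, t) + Dy (Dy G) (p, t) =
        t * sqrt ((Dy (Dx G) (p, t))\<^sup>2 - Dx (Dx G) (p, t) * Dy (Dy G) (p, t))"
    and F0: "\<And>q. q \<in> \<Omega> \<Longrightarrow> F (q, 0) = f0 q" and G0: "\<And>q. q \<in> \<Omega> \<Longrightarrow> G (q, 0) = f0 q"
    and harm: "dxx f0 p + dyy f0 p = 0" and hess: "dxx f0 p * dyy f0 p - (dxy f0 p)\<^sup>2 \<noteq> 0"
    and IH: "\<And>j q. j < Suc m' \<Longrightarrow> q \<in> \<Omega> \<Longrightarrow> (Dt ^^ j) F (q, 0) = (Dt ^^ j) G (q, 0)"
  shows "Dx (Dx ((Dt ^^ Suc m') F)) (p, 0) + Dy (Dy ((Dt ^^ Suc m') F)) (p, 0) =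
         Dx (Dx ((Dt ^^ Suc m') G)) (p, 0) + Dy (Dy ((Dt ^^ Suc m') G)) (p, 0)"
proof -
  define m where "m = Suc m'"
  have oU: "open U" using AF by (simp add: ana3_iff)
  have p0U: "(p, 0) \<in> U" using sub[OF p] e by simp
  define J where "J = {s. (p, s) \<in> U}"
  have oJ: "open J" unfolding J_def using oU by (rule open_slice)
  obtain r where r: "r > 0" "ball 0 r \<subseteq> J" using oJ p0U open_contains_ball[of J] by (auto simp: J_def)
  define af where "af = (\<lambda>s. Dx (Dx F) (p, s))"
  define bf where "bf = (\<lambda>s. Dy (Dy F) (p, s))"
  define cf where "cf = (\<lambda>s. Dy (Dx F) (p, s))"
  define ag where "ag = (\<lambda>s. Dx (Dx G) (p, s))"
  define bg where "bg = (\<lambda>s. Dy (Dy G) (p, s))"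
  define cg where "cg = (\<lambda>s. Dy (Dx G) (p, s))"
  have AF1: "real_analytic3_on U (Dx (Dx F))" "real_analytic3_on U (Dy (Dy F))" "real_analytic3_on U (Dy (Dx F))"
    using AF by (auto intro: ana3_Dx ana3_Dy)
  have AG1: "real_analytic3_on U (Dx (Dx G))" "real_analytic3_on U (Dy (Dy G))" "real_analytic3_on U (Dy (Dx G))"
    using AG by (auto intro: ana3_Dx ana3_Dy)
  have sm: "smooth1 J af" "smooth1 J bf" "smooth1 J cf" "smooth1 J ag" "smooth1 J bg" "smooth1 J cg"
    unfolding J_def af_def bf_def cf_def ag_def bg_def cg_def
    using AF1 AG1 by (auto intro: ana3_smooth1)
  have ct: "isCont af 0" "isCont bf 0" "isCont cf 0" "isCont ag 0" "isCont bg 0" "isCont cg 0"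
    unfolding af_def bf_def cf_def ag_def bg_def cg_def
    using AF1 AG1 p0U by (auto intro: isCont_slice)
  have locj: "\<And>q. q \<in> \<Omega> \<Longrightarrow> (Dt ^^ j) F (q, 0) = (Dt ^^ j) G (q, 0)" if "j < m" for j
    using IH that by (simp add: m_def)
  have jx: "\<And>q. q \<in> \<Omega> \<Longrightarrow> Dx ((Dt ^^ j) F) (q, 0) = Dx ((Dt ^^ j) G) (q, 0)" if "j < m" for j
    by (rule Dx_local_V[where F="(Dt ^^ j) F" and G="(Dt ^^ j) G" and t=0, OF oO locj[OF that]])
  have jy: "\<And>q. q \<in> \<Omega> \<Longrightarrow> Dy ((Dt ^^ j) F) (q, 0) = Dy ((Dt ^^ j) G) (q, 0)" if "j < m" for j
    by (rule Dy_local_V[where F="(Dt ^^ j) F" and G="(Dt ^^ j) G" and t=0, OF oO locj[OF that]])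
  have ja: "(deriv ^^ j) af 0 = (deriv ^^ j) ag 0" if "j < m" for j
  proof -
    have "(deriv ^^ j) af 0 = Dx (Dx ((Dt ^^ j) F)) (p, 0)"
      unfolding af_def Dt_iter_eq' by (rule comm_iter_DxDx[OF AF p0U])
    also have "\<dots> = Dx (Dx ((Dt ^^ j) G)) (p, 0)" by (rule Dx_local_V[where F="Dx ((Dt ^^ j) F)" and G="Dx ((Dt ^^ j) G)" and t=0, OF oO jx[OF that] p])
    also have "\<dots> = (deriv ^^ j) ag 0"
      unfolding ag_def Dt_iter_eq' by (rule comm_iter_DxDx[OF AG p0U, symmetric])
    finally show ?thesis .
  qed
  have jb: "(deriv ^^ j) bf 0 = (deriv ^^ j) bg 0" if "j < m" for j
  proof -
    have "(deriv ^^ j) bf 0 = Dy (Dy ((Dt ^^ j) F)) (p, 0)"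
      unfolding bf_def Dt_iter_eq' by (rule comm_iter_DyDy[OF AF p0U])
    also have "\<dots> = Dy (Dy ((Dt ^^ j) G)) (p, 0)" by (rule Dy_local_V[where F="Dy ((Dt ^^ j) F)" and G="Dy ((Dt ^^ j) G)" and t=0, OF oO jy[OF that] p])
    also have "\<dots> = (deriv ^^ j) bg 0"
      unfolding bg_def Dt_iter_eq' by (rule comm_iter_DyDy[OF AG p0U, symmetric])
    finally show ?thesis .
  qed
  have jc: "(deriv ^^ j) cf 0 = (deriv ^^ j) cg 0" if "j < m" for j
  proof -
    have "(deriv ^^ j) cf 0 = Dy (Dx ((Dt ^^ j) F)) (p, 0)"
      unfolding cf_def Dt_iter_eq' by (rule comm_iter_DyDx[OF AF p0U])
    also have "\<dots> = Dy (Dx ((Dt ^^ j) G)) (p, 0)" by (rule Dy_local_V[where F="Dx ((Dt ^^ j) F)" and G="Dx ((Dt ^^ j) G)" and t=0, OF oO jx[OF that] p])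
    also have "\<dots> = (deriv ^^ j) cg 0"
      unfolding cg_def Dt_iter_eq' by (rule comm_iter_DyDx[OF AG p0U, symmetric])
    finally show ?thesis .
  qed
  have J0: "0 \<in> J" using p0U by (simp add: J_def)
  have sa: "small m' (\<lambda>t. af t - ag t)"
    by (rule jet_small[OF smooth1_diff[OF sm(1) sm(4)] r(2) r(1)])
       (use ja smooth1_diff_eq[OF sm(1) sm(4)] J0 in \<open>auto simp: m_def\<close>)
  have sb: "small m' (\<lambda>t. bf t - bg t)"
    by (rule jet_small[OF smooth1_diff[OF sm(2) sm(5)] r(2) r(1)])
       (use jb smooth1_diff_eq[OF sm(2) sm(5)] J0 in \<open>auto simp: m_def\<close>)
  have sc: "small m' (\<lambda>t. cf t - cg t)"
    by (rule jet_small[OF smooth1_diff[OF sm(3) sm(6)] r(2) r(1)])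
       (use jc smooth1_diff_eq[OF sm(3) sm(6)] J0 in \<open>auto simp: m_def\<close>)
  define Qf where "Qf = (\<lambda>t. (cf t)\<^sup>2 - af t * bf t)"
  define Qg where "Qg = (\<lambda>t. (cg t)\<^sup>2 - ag t * bg t)"
  have s1: "small m' (\<lambda>t. (cf t + cg t) * (cf t - cg t))"
    by (rule small_mult_bounded[OF sc bounded_near]) (use ct in \<open>auto intro: continuous_intros\<close>)
  have s2: "small m' (\<lambda>t. bf t * (af t - ag t))"
    by (rule small_mult_bounded[OF sa bounded_near[OF ct(2)]])
  have s3: "small m' (\<lambda>t. ag t * (bf t - bg t))"
    by (rule small_mult_bounded[OF sb bounded_near[OF ct(4)]])
  have "small m' (\<lambda>t. (cf t + cg t) * (cf t - cg t) - bf t * (af t - ag t) - ag t * (bf t - bg t))"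
    by (intro small_diff s1 s2 s3)
  then have sQ: "small m' (\<lambda>t. Qf t - Qg t)"
    by (rule small_cong) (auto simp: Qf_def Qg_def algebra_simps power2_eq_square intro!: exI[of _ 1])
  define F0' where "F0' = (\<lambda>x :: pt. f0 (fst x))"
  have eF: "\<And>q. q \<in> \<Omega> \<Longrightarrow> F (q, 0) = F0' (q, 0)" using F0 by (simp add: F0'_def)
  have eG: "\<And>q. q \<in> \<Omega> \<Longrightarrow> G (q, 0) = F0' (q, 0)" using G0 by (simp add: F0'_def)
  have xF: "\<And>q. q \<in> \<Omega> \<Longrightarrow> Dx F (q, 0) = Dx F0' (q, 0)" by (rule Dx_local_V[where F=F and G=F0' and t=0, OF oO eF])
  have yF: "\<And>q. q \<in> \<Omega> \<Longrightarrow> Dy F (q, 0) = Dy F0' (q, 0)" by (rule Dy_local_V[where F=F and G=F0' and t=0, OF oO eF])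
  have xG: "\<And>q. q \<in> \<Omega> \<Longrightarrow> Dx G (q, 0) = Dx F0' (q, 0)" by (rule Dx_local_V[where F=G and G=F0' and t=0, OF oO eG])
  have yG: "\<And>q. q \<in> \<Omega> \<Longrightarrow> Dy G (q, 0) = Dy F0' (q, 0)" by (rule Dy_local_V[where F=G and G=F0' and t=0, OF oO eG])
  have a0: "af 0 = dxx f0 p" "ag 0 = dxx f0 p"
    unfolding af_def ag_def using Dx_local_V[where F="Dx F" and G="Dx F0'" and t=0, OF oO xF p] Dx_local_V[where F="Dx G" and G="Dx F0'" and t=0, OF oO xG p]
    by (simp_all add: F0'_def Dx_def dxx_def)
  have b0: "bf 0 = dyy f0 p" "bg 0 = dyy f0 p"
    unfolding bf_def bg_def using Dy_local_V[where F="Dy F" and G="Dy F0'" and t=0, OF oO yF p] Dy_local_V[where F="Dy G" and G="Dy F0'" and t=0, OF oO yG p]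
    by (simp_all add: F0'_def Dy_def dyy_def)
  have c0: "cf 0 = dxy f0 p" "cg 0 = dxy f0 p"
    unfolding cf_def cg_def using Dy_local_V[where F="Dx F" and G="Dx F0'" and t=0, OF oO xF p] Dy_local_V[where F="Dx G" and G="Dx F0'" and t=0, OF oO xG p]
    by (simp_all add: F0'_def Dx_def Dy_def dxy_def)
  define Q0 where "Q0 = (dxy f0 p)\<^sup>2 - dxx f0 p * dyy f0 p"
  have Q0: "Q0 > 0"
  proof -
    have "dyy f0 p = - dxx f0 p" using harm by simp
    then have "Q0 = (dxy f0 p)\<^sup>2 + (dxx f0 p)\<^sup>2" "(dxy f0 p)\<^sup>2 + (dxx f0 p)\<^sup>2 \<noteq> 0"
      using hess by (auto simp: Q0_def power2_eq_square)
    then show ?thesis by (simp add: add_nonneg_pos sum_power2_gt_zero_iff)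
  qed
  have Qf0: "Qf 0 = Q0" "Qg 0 = Q0" using a0 b0 c0 by (simp_all add: Qf_def Qg_def Q0_def)
  have cQ: "isCont Qf 0" "isCont Qg 0" unfolding Qf_def Qg_def using ct by (auto intro!: continuous_intros)
  obtain d1 where d1: "d1 > 0" "\<And>t. \<bar>t\<bar> < d1 \<Longrightarrow> Qf t \<ge> Q0 / 2"
    using near_pos[OF cQ(1)] Qf0 Q0 by auto
  obtain d2 where d2: "d2 > 0" "\<And>t. \<bar>t\<bar> < d2 \<Longrightarrow> Qg t \<ge> Q0 / 2"
    using near_pos[OF cQ(2)] Qf0 Q0 by auto
  have sS: "small m' (\<lambda>t. sqrt (Qf t) - sqrt (Qg t))"
    by (rule small_sqrt[OF sQ, of "Q0 / 2" "min d1 d2"]) (use Q0 d1 d2 in auto)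
  have sT: "small m (\<lambda>t. t * (sqrt (Qf t) - sqrt (Qg t)))" unfolding m_def by (rule small_times_t[OF sS])
  have sL: "small m (\<lambda>t. (af t + bf t) - (ag t + bg t))"
  proof (rule small_cong[OF sT])
    show "\<exists>d>0. \<forall>t. \<bar>t\<bar> < d \<longrightarrow> t * (sqrt (Qf t) - sqrt (Qg t)) = (af t + bf t) - (ag t + bg t)"
    proof (intro exI[of _ \<epsilon>] conjI allI impI)
      show "\<epsilon> > 0" by fact
      fix t :: real assume "\<bar>t\<bar> < \<epsilon>"
      then have t: "t \<in> {-\<epsilon>..\<epsilon>}" by auto
      show "t * (sqrt (Qf t) - sqrt (Qg t)) = (af t + bf t) - (ag t + bg t)"
        using pdeF[OF t] pdeG[OF t] by (simp add: af_def bf_def cf_def ag_def bg_def cg_def Qf_def Qg_def algebra_simps)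
    qed
  qed
  have smL: "smooth1 J (\<lambda>t. (af t + bf t) - (ag t + bg t))"
    by (intro smooth1_diff smooth1_add sm)
  have "(deriv ^^ m) (\<lambda>t. (af t + bf t) - (ag t + bg t)) 0 = 0"
    by (rule small_jet[OF smL r(2) r(1) sL]) simp
  moreover have "(deriv ^^ m) (\<lambda>t. (af t + bf t) - (ag t + bg t)) 0 =
      ((deriv ^^ m) af 0 + (deriv ^^ m) bf 0) - ((deriv ^^ m) ag 0 + (deriv ^^ m) bg 0)"
    using smooth1_diff_eq[OF smooth1_add[OF sm(1) sm(2)] smooth1_add[OF sm(4) sm(5)], of m]
      smooth1_add_eq[OF sm(1) sm(2), of m] smooth1_add_eq[OF sm(4) sm(5), of m] J0 by simp
  moreover have "(deriv ^^ m) af 0 = Dx (Dx ((Dt ^^ m) F)) (p, 0)"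
    unfolding af_def Dt_iter_eq' by (rule comm_iter_DxDx[OF AF p0U])
  moreover have "(deriv ^^ m) bf 0 = Dy (Dy ((Dt ^^ m) F)) (p, 0)"
    unfolding bf_def Dt_iter_eq' by (rule comm_iter_DyDy[OF AF p0U])
  moreover have "(deriv ^^ m) ag 0 = Dx (Dx ((Dt ^^ m) G)) (p, 0)"
    unfolding ag_def Dt_iter_eq' by (rule comm_iter_DxDx[OF AG p0U])
  moreover have "(deriv ^^ m) bg 0 = Dy (Dy ((Dt ^^ m) G)) (p, 0)"
    unfolding bg_def Dt_iter_eq' by (rule comm_iter_DyDy[OF AG p0U])
  ultimately show ?thesis unfolding m_def by simp
qed

theorem corollary3:
  fixes \<Omega> :: "(real \<times> real) set"
    and f0 :: "real \<times> real \<Rightarrow> real"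
    and \<epsilon> :: real
    and f g :: "(real \<times> real) \<times> real \<Rightarrow> real"
  assumes "jordan_domain_analytic \<Omega>"
    and "analytic_on_closed2 (closure \<Omega>) f0"
    and "\<forall>p\<in>\<Omega>. dxx f0 p + dyy f0 p = 0"
    and "\<forall>p\<in>closure \<Omega>. dxx f0 p * dyy f0 p - (dxy f0 p)\<^sup>2 \<noteq> 0"
    and "\<epsilon> > 0"
    and "analytic_on_closed3 (closure \<Omega> \<times> {-\<epsilon>..\<epsilon>}) f"
    and "\<forall>p\<in>closure \<Omega>. \<forall>t\<in>{-\<epsilon>..\<epsilon>}.
           dxx (\<lambda>q. f (q, t)) p + dyy (\<lambda>q. f (q, t)) p =
           t * sqrt ((dxy (\<lambda>q. f (q, t)) p)\<^sup>2 - dxx (\<lambda>q. f (q, t)) p * dyy (\<lambda>q. f (q, t)) p)"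
    and "\<forall>p\<in>closure \<Omega>. f (p, 0) = f0 p"
    and "\<forall>p\<in>frontier \<Omega>. \<forall>t\<in>{-\<epsilon>..\<epsilon>}. f (p, t) = f0 p"
    and "analytic_on_closed3 (closure \<Omega> \<times> {-\<epsilon>..\<epsilon>}) g"
    and "\<forall>p\<in>closure \<Omega>. \<forall>t\<in>{-\<epsilon>..\<epsilon>}.
           dxx (\<lambda>q. g (q, t)) p + dyy (\<lambda>q. g (q, t)) p =
           t * sqrt ((dxy (\<lambda>q. g (q, t)) p)\<^sup>2 - dxx (\<lambda>q. g (q, t)) p * dyy (\<lambda>q. g (q, t)) p)"
    and "\<forall>p\<in>closure \<Omega>. g (p, 0) = f0 p"
    and "\<forall>p\<in>frontier \<Omega>. \<forall>t\<in>{-\<epsilon>..\<epsilon>}. g (p, t) = f0 p"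
  shows "\<forall>p\<in>closure \<Omega>. \<forall>t\<in>{-\<epsilon>..\<epsilon>}. f (p, t) = g (p, t)"
proof -
  have oO: "open \<Omega>" and bO: "bounded \<Omega>" using jordan_open_bounded[OF assms(1)] by auto
  define K where "K = closure \<Omega>"
  have OK: "\<Omega> \<subseteq> K" unfolding K_def by (rule closure_subset)
  have frK: "frontier \<Omega> \<subseteq> K" unfolding K_def frontier_def by auto
  obtain Uf where Uf: "closure \<Omega> \<times> {-\<epsilon>..\<epsilon>} \<subseteq> Uf" "real_analytic3_on Uf f"
    using assms(6) unfolding analytic_on_closed3_def by blast
  obtain Ug where Ug: "closure \<Omega> \<times> {-\<epsilon>..\<epsilon>} \<subseteq> Ug" "real_analytic3_on Ug g"
    using assms(10) unfolding analytic_on_closed3_def by blast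
  define U where "U = Uf \<inter> Ug"
  have oU: "open U" unfolding U_def using Uf(2) Ug(2) by (simp add: ana3_iff open_Int)
  have AF: "real_analytic3_on U f" by (rule ana3_mono[OF Uf(2) oU]) (auto simp: U_def)
  have AG: "real_analytic3_on U g" by (rule ana3_mono[OF Ug(2) oU]) (auto simp: U_def)
  have subK: "(q, t) \<in> U" if "q \<in> K" "t \<in> {-\<epsilon>..\<epsilon>}" for q t
    using that Uf(1) Ug(1) by (auto simp: U_def K_def)
  have e0: "(0::real) \<in> {-\<epsilon>..\<epsilon>}" using assms(5) by simp
  have main: "\<forall>q\<in>K. (Dt ^^ m) f (q, 0) = (Dt ^^ m) g (q, 0)" for m
  proof (induction m rule: less_induct)
    case (less m)
    show ?case
    proof (cases m)
      case 0
      then show ?thesis using assms(8,12) by (simp add: K_def)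
    next
      case (Suc m')
      define Fm where "Fm = (Dt ^^ m) f"
      define Gm where "Gm = (Dt ^^ m) g"
      have AFm: "real_analytic3_on U Fm" unfolding Fm_def by (rule ana3_Dt_iter[OF AF])
      have AGm: "real_analytic3_on U Gm" unfolding Gm_def by (rule ana3_Dt_iter[OF AG])
      define w where "w = (\<lambda>q. Fm (q, 0) - Gm (q, 0))"
      have cw: "continuous_on K w"
      proof -
        have im: "(\<lambda>q. (q, 0::real)) ` K \<subseteq> U" using subK e0 by auto
        have c1: "continuous_on K (\<lambda>q. Fm (q, 0))"
          by (rule continuous_on_compose2[OF ana3_cont[OF AFm] _ im]) (intro continuous_intros)
        have c2: "continuous_on K (\<lambda>q. Gm (q, 0))"
          by (rule continuous_on_compose2[OF ana3_cont[OF AGm] _ im]) (intro continuous_intros)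
        show ?thesis unfolding w_def using c1 c2 by (rule continuous_on_diff)
      qed
      have fr0: "w q = 0" if q: "q \<in> frontier \<Omega>" for q
      proof -
        have oI: "open {-\<epsilon><..<\<epsilon>}" by simp
        have I0: "(0::real) \<in> {-\<epsilon><..<\<epsilon>}" using assms(5) by simp
        have "Fm (q, 0) = (deriv ^^ m) (\<lambda>s. f (q, s)) 0" unfolding Fm_def Dt_iter_eq' ..
        also have "\<dots> = (deriv ^^ m) (\<lambda>s. f0 q) 0"
          by (rule deriv_local[OF oI _ I0]) (use assms(9) q in auto)
        also have "\<dots> = 0" unfolding Suc deriv_funpow_const ..
        finally have 1: "Fm (q, 0) = 0" .
        have "Gm (q, 0) = (deriv ^^ m) (\<lambda>s. g (q, s)) 0" unfolding Gm_def Dt_iter_eq' ..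
        also have "\<dots> = (deriv ^^ m) (\<lambda>s. f0 q) 0"
          by (rule deriv_local[OF oI _ I0]) (use assms(13) q in auto)
        also have "\<dots> = 0" unfolding Suc deriv_funpow_const ..
        finally have 2: "Gm (q, 0) = 0" .
        show ?thesis using 1 2 by (simp add: w_def)
      qed
      have key: "Dx (Dx Fm) (q, 0) + Dy (Dy Fm) (q, 0) = Dx (Dx Gm) (q, 0) + Dy (Dy Gm) (q, 0)"
        if q: "q \<in> \<Omega>" for q
      proof -
        have qK: "q \<in> K" using q OK by auto
        have pde: "Dx (Dx H) (q, t) + Dy (Dy H) (q, t) =
            t * sqrt ((Dy (Dx H) (q, t))\<^sup>2 - Dx (Dx H) (q, t) * Dy (Dy H) (q, t))"
          if H: "H = f \<or> H = g" and t: "t \<in> {-\<epsilon>..\<epsilon>}" for H t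
        proof -
          have "dxx (\<lambda>q. H (q, t)) q + dyy (\<lambda>q. H (q, t)) q =
             t * sqrt ((dxy (\<lambda>q. H (q, t)) q)\<^sup>2 - dxx (\<lambda>q. H (q, t)) q * dyy (\<lambda>q. H (q, t)) q)"
            using H assms(7,11) qK t by (auto simp: K_def)
          then show ?thesis unfolding dxx_eq[of H t q] dyy_eq[of H t q] dxy_eq[of H t q] .
        qed
        show ?thesis unfolding Fm_def Gm_def Suc
        proof (rule key_step[OF AF AG oO q assms(5)])
          show "\<And>q t. q \<in> \<Omega> \<Longrightarrow> t \<in> {-\<epsilon>..\<epsilon>} \<Longrightarrow> (q, t) \<in> U" using subK OK by auto
          show "\<And>t. t \<in> {-\<epsilon>..\<epsilon>} \<Longrightarrow> Dx (Dx f) (q, t) + Dy (Dy f) (q, t) =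
             t * sqrt ((Dy (Dx f) (q, t))\<^sup>2 - Dx (Dx f) (q, t) * Dy (Dy f) (q, t))" using pde by blast
          show "\<And>t. t \<in> {-\<epsilon>..\<epsilon>} \<Longrightarrow> Dx (Dx g) (q, t) + Dy (Dy g) (q, t) =
             t * sqrt ((Dy (Dx g) (q, t))\<^sup>2 - Dx (Dx g) (q, t) * Dy (Dy g) (q, t))" using pde by blast
          show "\<And>q. q \<in> \<Omega> \<Longrightarrow> f (q, 0) = f0 q" using assms(8) OK by (auto simp: K_def)
          show "\<And>q. q \<in> \<Omega> \<Longrightarrow> g (q, 0) = f0 q" using assms(12) OK by (auto simp: K_def)
          show "dxx f0 q + dyy f0 q = 0" using assms(3) q by blast
          show "dxx f0 q * dyy f0 q - (dxy f0 q)\<^sup>2 \<noteq> 0" using assms(4) qK by (auto simp: K_def)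
          show "\<And>j q. j < Suc m' \<Longrightarrow> q \<in> \<Omega> \<Longrightarrow> (Dt ^^ j) f (q, 0) = (Dt ^^ j) g (q, 0)"
            using less.IH OK Suc by blast
        qed
      qed
      have lapw: "\<exists>wx wy A B.
        (\<forall>x. (x, snd q) \<in> \<Omega> \<longrightarrow> ((\<lambda>r. (\<sigma> * w (r, snd q))) has_real_derivative wx x) (at x)) \<and>
        (wx has_real_derivative A) (at (fst q)) \<and>
        (\<forall>y. (fst q, y) \<in> \<Omega> \<longrightarrow> ((\<lambda>r. (\<sigma> * w (fst q, r))) has_real_derivative wy y) (at y)) \<and>
        (wy has_real_derivative B) (at (snd q)) \<and> A + B = 0" if q: "q \<in> \<Omega>" for q and \<sigma> :: real
      proof (intro exI conjI allI impI)
        have qU: "(q, 0) \<in> U" using OK q e0 by (intro subK) auto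
        fix x assume "(x, snd q) \<in> \<Omega>"
        then have xU: "((x, snd q), 0) \<in> U" using OK e0 by (intro subK) auto
        have d1: "((\<lambda>s. Fm ((s, snd q), 0)) has_real_derivative Dx Fm ((x, snd q), 0)) (at x)"
          using ana3_Dx_has[OF AFm xU] by simp
        have d2: "((\<lambda>s. Gm ((s, snd q), 0)) has_real_derivative Dx Gm ((x, snd q), 0)) (at x)"
          using ana3_Dx_has[OF AGm xU] by simp
        show "((\<lambda>r. \<sigma> * w (r, snd q)) has_real_derivative
            (\<lambda>x. \<sigma> * (Dx Fm ((x, snd q), 0) - Dx Gm ((x, snd q), 0))) x) (at x)"
          unfolding w_def using d1 d2 by (auto intro!: derivative_eq_intros)
      next
        have qU: "(q, 0) \<in> U" using OK q e0 by (intro subK) auto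
        have d1: "((\<lambda>s. Dx Fm ((s, snd q), 0)) has_real_derivative Dx (Dx Fm) (q, 0)) (at (fst q))"
          using ana3_Dx_has[OF ana3_Dx[OF AFm] qU] by simp
        have d2: "((\<lambda>s. Dx Gm ((s, snd q), 0)) has_real_derivative Dx (Dx Gm) (q, 0)) (at (fst q))"
          using ana3_Dx_has[OF ana3_Dx[OF AGm] qU] by simp
        show "((\<lambda>x. \<sigma> * (Dx Fm ((x, snd q), 0) - Dx Gm ((x, snd q), 0))) has_real_derivative
            \<sigma> * (Dx (Dx Fm) (q, 0) - Dx (Dx Gm) (q, 0))) (at (fst q))"
          using d1 d2 by (auto intro!: derivative_eq_intros)
      next
        fix y assume "(fst q, y) \<in> \<Omega>"
        then have yU: "((fst q, y), 0) \<in> U" using OK e0 by (intro subK) auto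
        have d1: "((\<lambda>s. Fm ((fst q, s), 0)) has_real_derivative Dy Fm ((fst q, y), 0)) (at y)"
          using ana3_Dy_has[OF AFm yU] by simp
        have d2: "((\<lambda>s. Gm ((fst q, s), 0)) has_real_derivative Dy Gm ((fst q, y), 0)) (at y)"
          using ana3_Dy_has[OF AGm yU] by simp
        show "((\<lambda>r. \<sigma> * w (fst q, r)) has_real_derivative
            (\<lambda>y. \<sigma> * (Dy Fm ((fst q, y), 0) - Dy Gm ((fst q, y), 0))) y) (at y)"
          unfolding w_def using d1 d2 by (auto intro!: derivative_eq_intros)
      next
        have qU: "(q, 0) \<in> U" using OK q e0 by (intro subK) auto
        have d1: "((\<lambda>s. Dy Fm ((fst q, s), 0)) has_real_derivative Dy (Dy Fm) (q, 0)) (at (snd q))"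
          using ana3_Dy_has[OF ana3_Dy[OF AFm] qU] by simp
        have d2: "((\<lambda>s. Dy Gm ((fst q, s), 0)) has_real_derivative Dy (Dy Gm) (q, 0)) (at (snd q))"
          using ana3_Dy_has[OF ana3_Dy[OF AGm] qU] by simp
        show "((\<lambda>y. \<sigma> * (Dy Fm ((fst q, y), 0) - Dy Gm ((fst q, y), 0))) has_real_derivative
            \<sigma> * (Dy (Dy Fm) (q, 0) - Dy (Dy Gm) (q, 0))) (at (snd q))"
          using d1 d2 by (auto intro!: derivative_eq_intros)
      next
        show "\<sigma> * (Dx (Dx Fm) (q, 0) - Dx (Dx Gm) (q, 0)) + \<sigma> * (Dy (Dy Fm) (q, 0) - Dy (Dy Gm) (q, 0)) = 0"
        proof -
          have "\<sigma> * (Dx (Dx Fm) (q, 0) - Dx (Dx Gm) (q, 0)) + \<sigma> * (Dy (Dy Fm) (q, 0) - Dy (Dy Gm) (q, 0))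
             = \<sigma> * ((Dx (Dx Fm) (q, 0) + Dy (Dy Fm) (q, 0)) - (Dx (Dx Gm) (q, 0) + Dy (Dy Gm) (q, 0)))"
            by (simp add: algebra_simps)
          then show ?thesis using key[OF q] by simp
        qed
      qed
      have le1: "1 * w q \<le> 0" if "q \<in> closure \<Omega>" for q
      proof (rule max_principle[OF oO bO, where w="\<lambda>q. 1 * w q"])
        show "continuous_on (closure \<Omega>) (\<lambda>q. 1 * w q)" using cw by (simp add: K_def)
        show "\<And>p. p \<in> frontier \<Omega> \<Longrightarrow> 1 * w p \<le> 0" using fr0 by simp
        show "\<And>p. p \<in> \<Omega> \<Longrightarrow> \<exists>wx wy A B.
          (\<forall>x. (x, snd p) \<in> \<Omega> \<longrightarrow> ((\<lambda>r. 1 * w (r, snd p)) has_real_derivative wx x) (at x)) \<and>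
          (wx has_real_derivative A) (at (fst p)) \<and>
          (\<forall>y. (fst p, y) \<in> \<Omega> \<longrightarrow> ((\<lambda>r. 1 * w (fst p, r)) has_real_derivative wy y) (at y)) \<and>
          (wy has_real_derivative B) (at (snd p)) \<and> A + B = 0" by (rule lapw)
      qed fact
      have le2: "(-1) * w q \<le> 0" if "q \<in> closure \<Omega>" for q
      proof (rule max_principle[OF oO bO, where w="\<lambda>q. (-1) * w q"])
        show "continuous_on (closure \<Omega>) (\<lambda>q. (-1) * w q)" using cw by (simp add: K_def continuous_on_minus)
        show "\<And>p. p \<in> frontier \<Omega> \<Longrightarrow> (-1) * w p \<le> 0" using fr0 by simp
        show "\<And>p. p \<in> \<Omega> \<Longrightarrow> \<exists>wx wy A B.
          (\<forall>x. (x, snd p) \<in> \<Omega> \<longrightarrow> ((\<lambda>r. (-1) * w (r, snd p)) has_real_derivative wx x) (at x)) \<and>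
          (wx has_real_derivative A) (at (fst p)) \<and>
          (\<forall>y. (fst p, y) \<in> \<Omega> \<longrightarrow> ((\<lambda>r. (-1) * w (fst p, r)) has_real_derivative wy y) (at y)) \<and>
          (wy has_real_derivative B) (at (snd p)) \<and> A + B = 0" by (rule lapw)
      qed fact
      show ?thesis
      proof
        fix q assume "q \<in> K"
        then have "w q = 0" using le1[of q] le2[of q] by (simp add: K_def)
        then show "(Dt ^^ m) f (q, 0) = (Dt ^^ m) g (q, 0)" by (simp add: w_def Fm_def Gm_def)
      qed
    qed
  qed
  show ?thesis
  proof (intro ballI)
    fix p t assume p: "p \<in> closure \<Omega>" and t: "t \<in> {-\<epsilon>..\<epsilon>}"
    show "f (p, t) = g (p, t)"
    proof (rule identity_t[OF AF AG _ _ _ t])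
      show "\<And>t. t \<in> {-\<epsilon>..\<epsilon>} \<Longrightarrow> (p, t) \<in> U" using subK p by (simp add: K_def)
      show "\<epsilon> \<ge> 0" using assms(5) by simp
      show "\<And>k. (Dt ^^ k) f (p, 0) = (Dt ^^ k) g (p, 0)" using main p by (simp add: K_def)
    qed
  qed
qed

end
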